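(* Assume the standing setting and Assumptions (A1), (A2), (A3) described in the context, and let $\xi\in L^2_{\mathcal{F}_{N-1}}(\Omega;\mathbb{R}^n)$. A control $u^*=\{u_k^*\}_{k\in\mathcal{T}}\in\mathcal{U}$ is optimal for the terminal state $\xi$ (i.e. $\mathcal{J}(N,\xi;u^* )=\inf_{u\in\mathcal{U}}\mathcal{J}(N,\xi;u)$) if and only if there exists a pair of square-integrable processes $(x^*,y^* )=(x_k^*,y_k^* )_{k=0}^N$ satisfying the Hamiltonian system $x_{k+1}^*=A_k^\top x_k^*+Q_k\mathbb{E}_{k-1}[y_{k+1}^*]+S_k^\top u_k^*+\eta_k+C_k^\top x_k^*\omega_k$, $y_k^*=A_k\mathbb{E}_{k-1}[y_{k+1}^*]+B_ku_k^*+C_k\mathbb{E}_{k-1}[y_{k+1}^*\omega_k]+q_k$, for $k\in\mathcal{T}$, $x_0^*=G_0y_0^*$, $y_N^*=\xi$, together with the stationarity condition $B_k^\top x_k^*+S_k\mathbb{E}_{k-1}[y_{k+1}^*]+R_ku_k^*+\rho_k=0$ for all $k\in\mathcal{T}$.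
   Context: Fix integers $N\ge 1$, $n,m\ge1$, $\mathcal{T}=\{0,\dots,N-1\}$. $(\Omega,\mathcal{F},\mathbb{P})$ complete with scalar sequence $\{\omega_k\}_{k\in\mathcal{T}}$, $\mathcal{F}_k=\sigma\{\omega_0,\dots,\omega_k\}$ (completed), $\mathcal{F}_{-1}$ trivial, $\mathbb{E}[\omega_k\mid\mathcal{F}_{k-1}]=0$, $\mathbb{E}[\omega_k^2\mid\mathcal{F}_{k-1}]=1$. $\mathbb{E}_{k-1}[\cdot]=\mathbb{E}[\cdot\mid\mathcal{F}_{k-1}]$. $L^2_{\mathcal{F}_{N-1}}(\Omega;\mathbb{R}^n)$ = square-integrable $\mathcal{F}_{N-1}$-measurable vectors; $L^2_{\mathbb{F}}(\mathcal{T};\mathbb{R}^d)$ = processes $(h_k)_{k\in\mathcal{T}}$, $h_k$ $\mathcal{F}_{k-1}$-measurable, $\mathbb{E}\sum|h_k|^2<\infty$. $\mathcal{U}=L^2_{\mathbb{F}}(\mathcal{T};\mathbb{R}^m)$. (A1): $A_k,C_k\in\mathbb{R}^{n\times n}$, $B_k\in\mathbb{R}^{n\times m}$ deterministic; $q\in L^2_{\mathbb{F}}(\mathcal{T};\mathbb{R}^n)$. (A2): $G_0\in\mathbb{S}^n$, $Q_k\in\mathbb{S}^n$, $R_k\in\mathbb{S}^m$, $S_k\in\mathbb{R}^{m\times n}$ deterministic; $\eta\in L^2_{\mathbb{F}}(\mathcal{T};\mathbb{R}^n)$, $\rho\in L^2_{\mathbb{F}}(\mathcal{T};\mathbb{R}^m)$.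 (A3): $G_0\ge0$, $R_k$ uniformly positive definite ($R_k\ge\delta I$ for some $\delta>0$), and $Q_k-S_k^\top R_k^{-1}S_k\ge0$ for all $k\in\mathcal{T}$. State equation: $y_k=A_k\mathbb{E}_{k-1}[y_{k+1}]+B_ku_k+C_k\mathbb{E}_{k-1}[y_{k+1}\omega_k]+q_k$ ($k\in\mathcal{T}$), $y_N=\xi$, with unique adapted square-integrable solution $y^{(\xi,u)}$. Cost: $\mathcal{J}(N,\xi;u)=\frac12\mathbb{E}\{\langle G_0y_0,y_0\rangle+\sum_{k=0}^{N-1}[\langle Q_k\bar y_k,\bar y_k\rangle+2\langle S_k\bar y_k,u_k\rangle+\langle R_ku_k,u_k\rangle+2\langle\eta_k,\bar y_k\rangle+2\langle\rho_k,u_k\rangle]\}$, $\bar y_k=\mathbb{E}_{k-1}[y_{k+1}]$, $y=y^{(\xi,u)}$. *)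

theory Defs
  imports "HOL-Probability.Probability"
begin

text \<open>We write filt M w j for the
(completed) sigma-algebra F_(j-1) generated by w_0,...,w_(j-1) together with the
M-null sets; hence filt M w 0 is the completed trivial sigma-algebra F_(-1),
and the conditional expectation E_(k-1) is taken w.r.t. filt M w k.\<close>

definition filt :: "'a measure \<Rightarrow> (nat \<Rightarrow> 'a \<Rightarrow> real) \<Rightarrow> nat \<Rightarrow> 'a measure" where
  "filt M w j = sigma (space M)
     ({w i -` B \<inter> space M | i B. i < j \<and> B \<in> sets borel} \<union> null_sets M)"

definition cexp :: "'a measure \<Rightarrow> 'a measure \<Rightarrow> ('a \<Rightarrow> real^'n) \<Rightarrow> 'a \<Rightarrow> real^'n" where
  "cexp M F f = (\<lambda>x. \<chi> i. real_cond_exp M F (\<lambda>z. f z $ i) x)"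

definition L2 :: "'a measure \<Rightarrow> 'a measure \<Rightarrow> ('a \<Rightarrow> 'b::euclidean_space) set" where
  "L2 M F = {f. f \<in> borel_measurable F \<and> integrable M (\<lambda>x. (norm (f x))\<^sup>2)}"

definition L2F :: "'a measure \<Rightarrow> (nat \<Rightarrow> 'a \<Rightarrow> real) \<Rightarrow> nat \<Rightarrow> (nat \<Rightarrow> 'a \<Rightarrow> 'b::euclidean_space) set" where
  "L2F M w N = {h. \<forall>k<N. h k \<in> L2 M (filt M w k)}"

definition psd :: "real^'n^'n \<Rightarrow> bool" where
  "psd P \<longleftrightarrow> (\<forall>v. 0 \<le> v \<bullet> (P *v v))"

definition symm :: "real^'n^'n \<Rightarrow> bool" where
  "symm P \<longleftrightarrow> transpose P = P"

definition is_state ::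
  "'a measure \<Rightarrow> (nat \<Rightarrow> 'a \<Rightarrow> real) \<Rightarrow> nat \<Rightarrow>
   (nat \<Rightarrow> real^'n^'n) \<Rightarrow> (nat \<Rightarrow> real^'m^'n) \<Rightarrow> (nat \<Rightarrow> real^'n^'n) \<Rightarrow>
   (nat \<Rightarrow> 'a \<Rightarrow> real^'n) \<Rightarrow> ('a \<Rightarrow> real^'n) \<Rightarrow> (nat \<Rightarrow> 'a \<Rightarrow> real^'m) \<Rightarrow>
   (nat \<Rightarrow> 'a \<Rightarrow> real^'n) \<Rightarrow> bool" where
  "is_state M w N A B C q \<xi> u y \<longleftrightarrow>
     (\<forall>k\<le>N. y k \<in> L2 M (filt M w (min (Suc k) N))) \<and>
     (\<forall>k<N. AE x in M. y k x =
         A k *v cexp M (filt M w k) (y (Suc k)) x + B k *v u k x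
         + C k *v cexp M (filt M w k) (\<lambda>z. w k z *\<^sub>R y (Suc k) z) x + q k x) \<and>
     (AE x in M. y N x = \<xi> x)"

definition cost ::
  "'a measure \<Rightarrow> (nat \<Rightarrow> 'a \<Rightarrow> real) \<Rightarrow> nat \<Rightarrow>
   real^'n^'n \<Rightarrow> (nat \<Rightarrow> real^'n^'n) \<Rightarrow> (nat \<Rightarrow> real^'n^'m) \<Rightarrow> (nat \<Rightarrow> real^'m^'m) \<Rightarrow>
   (nat \<Rightarrow> 'a \<Rightarrow> real^'n) \<Rightarrow> (nat \<Rightarrow> 'a \<Rightarrow> real^'m) \<Rightarrow>
   (nat \<Rightarrow> 'a \<Rightarrow> real^'n) \<Rightarrow> (nat \<Rightarrow> 'a \<Rightarrow> real^'m) \<Rightarrow> real" where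
  "cost M w N G0 Q S R \<eta> \<rho> y u =
     1/2 * integral\<^sup>L M (\<lambda>x. (G0 *v y 0 x) \<bullet> y 0 x +
       (\<Sum>k<N. let yb = cexp M (filt M w k) (y (Suc k)) x in
          (Q k *v yb) \<bullet> yb + 2 * ((S k *v yb) \<bullet> u k x) + (R k *v u k x) \<bullet> u k x
          + 2 * (\<eta> k x \<bullet> yb) + 2 * (\<rho> k x \<bullet> u k x)))"

text \<open>The cost J(N,xi;u), evaluated at the (a.s. unique) state y^(xi,u).\<close>
definition J ::
  "'a measure \<Rightarrow> (nat \<Rightarrow> 'a \<Rightarrow> real) \<Rightarrow> nat \<Rightarrow>
   (nat \<Rightarrow> real^'n^'n) \<Rightarrow> (nat \<Rightarrow> real^'m^'n) \<Rightarrow> (nat \<Rightarrow> real^'n^'n) \<Rightarrow> (nat \<Rightarrow> 'a \<Rightarrow> real^'n) \<Rightarrow>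
   real^'n^'n \<Rightarrow> (nat \<Rightarrow> real^'n^'n) \<Rightarrow> (nat \<Rightarrow> real^'n^'m) \<Rightarrow> (nat \<Rightarrow> real^'m^'m) \<Rightarrow>
   (nat \<Rightarrow> 'a \<Rightarrow> real^'n) \<Rightarrow> (nat \<Rightarrow> 'a \<Rightarrow> real^'m) \<Rightarrow>
   ('a \<Rightarrow> real^'n) \<Rightarrow> (nat \<Rightarrow> 'a \<Rightarrow> real^'m) \<Rightarrow> real" where
  "J M w N A B C q G0 Q S R \<eta> \<rho> \<xi> u =
     cost M w N G0 Q S R \<eta> \<rho> (SOME y. is_state M w N A B C q \<xi> u y) u"

end

theory Submission
  imports Defs
begin

lemma vec_meas:
  fixes f :: "'a \<Rightarrow> real^'n"
  assumes "\<And>i. (\<lambda>x. f x $ i) \<in> borel_measurable M"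
  shows "f \<in> borel_measurable M"
proof (subst borel_measurable_euclidean_space, intro ballI)
  fix b :: "real^'n" assume "b \<in> Basis"
  then obtain i where b: "b = axis i 1" by (auto simp: Basis_vec_def)
  show "(\<lambda>x. f x \<bullet> b) \<in> borel_measurable M"
    using assms[of i] by (simp add: b cart_eq_inner_axis)
qed

lemma vec_nth_meas:
  fixes f :: "'a \<Rightarrow> real^'n"
  assumes "f \<in> borel_measurable M"
  shows "(\<lambda>x. f x $ i) \<in> borel_measurable M"
  using measurable_compose[OF assms borel_measurable_nth] .

lemma mv_meas[measurable (raw)]:
  fixes f :: "'a \<Rightarrow> real^'n" and A :: "real^'n^'m"
  assumes "f \<in> borel_measurable M"
  shows "(\<lambda>x. A *v f x) \<in> borel_measurable M"
  by (rule vec_meas) (use assms vec_nth_meas[OF assms] in \<open>auto simp add: matrix_vector_mult_def\<close>)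

lemma cexp_meas[measurable]:
  "cexp M F f \<in> borel_measurable F"
  unfolding cexp_def by (rule vec_meas) simp

locale setting = prob_space M for M :: "'a measure" +
  fixes w :: "nat \<Rightarrow> 'a \<Rightarrow> real" and N :: nat
  assumes compl: "complete_measure M"
  and w_meas: "\<forall>k<N. w k \<in> borel_measurable M"
  and w_sq: "\<forall>k<N. integrable M (\<lambda>x. (w k x)\<^sup>2)"
  and w_var: "\<forall>k<N. AE x in M. real_cond_exp M (filt M w k) (\<lambda>z. (w k z)\<^sup>2) x = 1"
begin

abbreviation "F \<equiv> filt M w"

definition gen where "gen k = {w i -` B \<inter> space M | i B. i < k \<and> B \<in> sets borel} \<union> null_sets M"

lemma gen_Pow: "gen k \<subseteq> Pow (space M)"
  unfolding gen_def using sets.sets_into_space by auto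

lemma space_F[simp]: "space (F k) = space M"
  unfolding filt_def by (simp add: space_measure_of_conv)

lemma sets_F: "sets (F k) = sigma_sets (space M) (gen k)"
  unfolding filt_def gen_def[symmetric] using gen_Pow by (simp add: sets_measure_of)

lemma F_mono: "j \<le> k \<Longrightarrow> sets (F j) \<subseteq> sets (F k)"
  unfolding sets_F by (rule sigma_sets_mono') (unfold gen_def, auto 4 4 intro: less_le_trans)

lemma F_sub: assumes "k \<le> N" shows "sets (F k) \<subseteq> sets M"
proof -
  have "gen k \<subseteq> sets M"
    using w_meas assms unfolding gen_def by (auto intro!: measurable_sets)
  then show ?thesis unfolding sets_F by (rule sets.sigma_sets_subset)
qed

lemma subalg: "k \<le> N \<Longrightarrow> subalgebra M (F k)"
  unfolding subalgebra_def using F_sub by auto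

lemma sfs: "k \<le> N \<Longrightarrow> sigma_finite_subalgebra M (F k)"
proof -
  assume "k \<le> N"
  then interpret finite_measure_subalgebra M "F k"
    by unfold_locales (rule subalg)
  show ?thesis by unfold_locales
qed

lemma meas_mono: "j \<le> k \<Longrightarrow> f \<in> borel_measurable (F j) \<Longrightarrow> f \<in> borel_measurable (F k)"
  by (rule measurable_from_subalg[of "F k" "F j"]) (auto simp: subalgebra_def F_mono)

lemma meas_M: "k \<le> N \<Longrightarrow> f \<in> borel_measurable (F k) \<Longrightarrow> f \<in> borel_measurable M"
  by (rule measurable_from_subalg[OF subalg])

lemma w_F: assumes "k < N" shows "w k \<in> borel_measurable (F (Suc k))"
proof (rule measurableI)
  fix A :: "real set" assume "A \<in> sets borel"
  then have "w k -` A \<inter> space M \<in> gen (Suc k)" unfolding gen_def by blast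
  then show "w k -` A \<inter> space (F (Suc k)) \<in> sets (F (Suc k))"
    unfolding sets_F by auto
qed auto

lemma null_F: "A \<in> null_sets M \<Longrightarrow> A \<in> sets (F k)"
  unfolding sets_F gen_def by auto

lemma complete_F:
  fixes f g :: "'a \<Rightarrow> 'b::topological_space"
  assumes f: "f \<in> borel_measurable (F k)" and ae: "AE x in M. g x = f x"
  shows "g \<in> borel_measurable (F k)"
proof (rule measurableI)
  fix A :: "'b set" assume A: "A \<in> sets borel"
  define D where "D = {x\<in>space M. g x \<noteq> f x}"
  from ae obtain N0 where N0: "N0 \<in> null_sets M" "{x\<in>space M. \<not> g x = f x} \<subseteq> N0"
    by (auto elim!: AE_E)
  have Dn: "D \<in> null_sets M"
    using complete_measure.complete2[OF compl] N0 unfolding D_def by blast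
  have D2: "g -` A \<inter> D \<in> null_sets M"
    using complete_measure.complete2[OF compl, of "g -` A \<inter> D" D] Dn by blast
  have eq: "g -` A \<inter> space M = ((f -` A \<inter> space M) - D) \<union> (g -` A \<inter> D)"
    unfolding D_def by auto
  have "f -` A \<inter> space (F k) \<in> sets (F k)" using f A by (rule measurable_sets)
  then have "f -` A \<inter> space M \<in> sets (F k)" by simp
  then show "g -` A \<inter> space (F k) \<in> sets (F k)"
    unfolding space_F eq using null_F[OF Dn] null_F[OF D2] by auto
qed auto

end

lemma mv_norm_le: "norm (A *v x) \<le> onorm ((*v) A) * norm (x::real^'n)"
  for A :: "real^'n^'m"
  using onorm[OF matrix_vector_mul_bounded_linear] by blast

lemma inner_mv: "(x::real^'m) \<bullet> (A *v y) = (transpose A *v x) \<bullet> y"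
  by (simp add: dot_lmul_matrix)

lemma norm2_vec: "(norm (x::real^'n))\<^sup>2 = (\<Sum>i\<in>UNIV. (x $ i)\<^sup>2)"
  unfolding power2_norm_eq_inner inner_vec_def by (simp add: power2_eq_square)

lemma int_bound_real:
  fixes f g :: "'s \<Rightarrow> real"
  assumes "integrable M f" "g \<in> borel_measurable M" "\<And>x. 0 \<le> g x" "\<And>x. g x \<le> f x"
  shows "integrable M g"
proof (rule Bochner_Integration.integrable_bound[OF assms(1,2)], rule AE_I2)
  fix x
  have "norm (g x) = g x" using assms(3)[of x] by simp
  also have "\<dots> \<le> norm (f x)" using assms(4)[of x] by simp
  finally show "norm (g x) \<le> norm (f x)" .
qed

lemma L2_meas: "f \<in> L2 M G \<Longrightarrow> f \<in> borel_measurable G"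
  by (simp add: L2_def)
lemma L2_int: "f \<in> L2 M G \<Longrightarrow> integrable M (\<lambda>x. (norm (f x))\<^sup>2)"
  by (simp add: L2_def)

lemma L2_sub: "subalgebra M G \<Longrightarrow> f \<in> L2 M G \<Longrightarrow> f \<in> L2 M M"
  unfolding L2_def using measurable_from_subalg by blast

lemma L2_mono: "subalgebra H G \<Longrightarrow> f \<in> L2 M G \<Longrightarrow> f \<in> L2 M H"
  unfolding L2_def using measurable_from_subalg by blast

lemma L2_add:
  fixes f g :: "'s \<Rightarrow> 'v::euclidean_space"
  assumes G: "subalgebra M G" and f: "f \<in> L2 M G" and g: "g \<in> L2 M G"
  shows "(\<lambda>x. f x + g x) \<in> L2 M G"
proof -
  have [measurable]: "f \<in> borel_measurable M" "g \<in> borel_measurable M"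
    using L2_meas[OF L2_sub[OF G f]] L2_meas[OF L2_sub[OF G g]] by auto
  have I: "integrable M (\<lambda>x. 2 * (norm (f x))\<^sup>2 + 2 * (norm (g x))\<^sup>2)"
    using L2_int[OF f] L2_int[OF g] by simp
  have Bd: "(norm (f x + g x))\<^sup>2 \<le> 2 * (norm (f x))\<^sup>2 + 2 * (norm (g x))\<^sup>2" for x
  proof -
    have "norm (f x + g x) \<le> norm (f x) + norm (g x)" by (rule norm_triangle_ineq)
    then have "(norm (f x + g x))\<^sup>2 \<le> (norm (f x) + norm (g x))\<^sup>2"
      by (rule power_mono) simp
    also have "\<dots> \<le> 2 * (norm (f x))\<^sup>2 + 2 * (norm (g x))\<^sup>2"
    proof -
      have "0 \<le> (norm (f x) - norm (g x))\<^sup>2" by simp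
      then show ?thesis unfolding power2_sum power2_diff by linarith
    qed
    finally show ?thesis .
  qed
  have Mf: "(\<lambda>x. (norm (f x + g x))\<^sup>2) \<in> borel_measurable M" by measurable
  have "integrable M (\<lambda>x. (norm (f x + g x))\<^sup>2)"
    by (rule int_bound_real[OF I Mf _ Bd]) simp
  moreover have "(\<lambda>x. f x + g x) \<in> borel_measurable G"
    using L2_meas[OF f] L2_meas[OF g] by (rule borel_measurable_add)
  ultimately show ?thesis by (simp add: L2_def)
qed

lemma L2_lin:
  fixes f :: "'a \<Rightarrow> 'b::euclidean_space" and T :: "'b \<Rightarrow> 'c::euclidean_space"
  assumes G: "subalgebra M G" and f: "f \<in> L2 M G" and T: "bounded_linear T"
  shows "(\<lambda>x. T (f x)) \<in> L2 M G"
proof -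
  have [measurable]: "f \<in> borel_measurable M"
    using L2_meas[OF L2_sub[OF G f]] .
  have Tm[measurable]: "T \<in> borel_measurable borel"
    by (intro borel_measurable_continuous_onI linear_continuous_on T)
  obtain K where K: "\<And>x. norm (T x) \<le> norm x * K" "K > 0"
    using bounded_linear.pos_bounded[OF T] by blast
  have I: "integrable M (\<lambda>x. K\<^sup>2 * (norm (f x))\<^sup>2)"
    using L2_int[OF f] by simp
  have Bd: "(norm (T (f x)))\<^sup>2 \<le> K\<^sup>2 * (norm (f x))\<^sup>2" for x
  proof -
    have "(norm (T (f x)))\<^sup>2 \<le> (norm (f x) * K)\<^sup>2"
      using K(1)[of "f x"] by (simp add: power_mono)
    then show ?thesis by (simp add: power_mult_distrib mult.commute)
  qed
  have Mf: "(\<lambda>x. (norm (T (f x)))\<^sup>2) \<in> borel_measurable M" by measurable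
  have "integrable M (\<lambda>x. (norm (T (f x)))\<^sup>2)"
    by (rule int_bound_real[OF I Mf _ Bd]) simp
  moreover have "(\<lambda>x. T (f x)) \<in> borel_measurable G"
    using measurable_compose[OF L2_meas[OF f] Tm] .
  ultimately show ?thesis by (simp add: L2_def)
qed

lemma L2_mv: "subalgebra M G \<Longrightarrow> f \<in> L2 M G \<Longrightarrow> (\<lambda>x. (A::real^'n^'m) *v f x) \<in> L2 M G"
  by (rule L2_lin) (assumption, assumption, rule matrix_vector_mul_bounded_linear)

lemma L2_scale: "subalgebra M G \<Longrightarrow> f \<in> L2 M G \<Longrightarrow> (\<lambda>x. c *\<^sub>R f x) \<in> L2 M G"
  by (rule L2_lin) (assumption, assumption, rule bounded_linear_scaleR_right)

lemma L2_uminus: "subalgebra M G \<Longrightarrow> f \<in> L2 M G \<Longrightarrow> (\<lambda>x. - f x) \<in> L2 M G"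
  using L2_scale[of M G f "-1"] by simp

lemma L2_diff: "subalgebra M G \<Longrightarrow> f \<in> L2 M G \<Longrightarrow> g \<in> L2 M G \<Longrightarrow> (\<lambda>x. f x - g x) \<in> L2 M G"
  using L2_add[of M G f "\<lambda>x. - g x"] L2_uminus[of M G g] by simp

lemma L2_zero: "(\<lambda>x. 0) \<in> L2 M G"
  by (simp add: L2_def)

lemma L2_cong: "f \<in> L2 M G \<Longrightarrow> g \<in> borel_measurable M \<Longrightarrow> g \<in> borel_measurable G
   \<Longrightarrow> subalgebra M G \<Longrightarrow> AE x in M. g x = f x \<Longrightarrow> g \<in> L2 M G"
proof -
  assume f: "f \<in> L2 M G" and g: "g \<in> borel_measurable M" "g \<in> borel_measurable G" and ae: "AE x in M. g x = f x"
  have "integrable M (\<lambda>x. (norm (g x))\<^sup>2)"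
    by (rule integrable_cong_AE_imp[OF L2_int[OF f]]) (use g(1) ae in \<open>measurable, auto\<close>)
  then show ?thesis using g by (simp add: L2_def)
qed

lemma L2_inner_int:
  fixes f g :: "'s \<Rightarrow> 'v::euclidean_space"
  assumes f: "f \<in> L2 M M" and g: "g \<in> L2 M M"
  shows "integrable M (\<lambda>x. f x \<bullet> g x)"
proof -
  have [measurable]: "f \<in> borel_measurable M" "g \<in> borel_measurable M"
    using L2_meas[OF f] L2_meas[OF g] by auto
  have I: "integrable M (\<lambda>x. (norm (f x))\<^sup>2 + (norm (g x))\<^sup>2)"
    using L2_int[OF f] L2_int[OF g] by simp
  have Bd: "norm (f x \<bullet> g x) \<le> norm ((norm (f x))\<^sup>2 + (norm (g x))\<^sup>2)" for x
  proof -
    have "\<bar>f x \<bullet> g x\<bar> \<le> norm (f x) * norm (g x)" by (rule Cauchy_Schwarz_ineq2)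
    also have "\<dots> \<le> (norm (f x))\<^sup>2 + (norm (g x))\<^sup>2"
    proof -
      have "0 \<le> (norm (f x) - norm (g x))\<^sup>2" "0 \<le> norm (f x) * norm (g x)" by simp_all
      then show ?thesis unfolding power2_diff by linarith
    qed
    finally show ?thesis by simp
  qed
  show ?thesis
    by (rule Bochner_Integration.integrable_bound[OF I]) (measurable, rule AE_I2, rule Bd)
qed

lemma L2_real_mult_int:
  fixes f g :: "'a \<Rightarrow> real"
  assumes f: "f \<in> L2 M M" and g: "g \<in> L2 M M"
  shows "integrable M (\<lambda>x. f x * g x)"
  using L2_inner_int[OF f g] by simp

lemma L2_nth: "subalgebra M G \<Longrightarrow> f \<in> L2 M G \<Longrightarrow> (\<lambda>x. (f x :: real^'n) $ i) \<in> L2 M G"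
  by (rule L2_lin[where T="\<lambda>v. v $ i"]) (assumption, assumption, rule bounded_linear_vec_nth)

lemma L2_integrable:
  fixes f :: "'s \<Rightarrow> 'v::euclidean_space"
  assumes P: "prob_space M" and f: "f \<in> L2 M M"
  shows "integrable M f"
proof -
  have [measurable]: "f \<in> borel_measurable M" using L2_meas[OF f] .
  have I: "integrable M (\<lambda>x. 1 + (norm (f x))\<^sup>2)"
    by (rule Bochner_Integration.integrable_add[OF finite_measure.integrable_const[OF prob_space.finite_measure[OF P]] L2_int[OF f]])
  have Bd: "norm (f x) \<le> norm (1 + (norm (f x))\<^sup>2)" for x
  proof -
    have "0 \<le> (norm (f x) - 1)\<^sup>2" by simp
    then have "2 * norm (f x) \<le> (norm (f x))\<^sup>2 + 1" unfolding power2_diff by simp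
    moreover have "0 \<le> norm (f x)" by simp
    ultimately have "norm (f x) \<le> 1 + (norm (f x))\<^sup>2" by linarith
    then show ?thesis by simp
  qed
  show ?thesis
    by (rule Bochner_Integration.integrable_bound[OF I]) (measurable, rule AE_I2, rule Bd)
qed

lemma subalg_refl: "subalgebra M M"
  by (simp add: subalgebra_def)

lemma L2_comp_int:
  assumes P: "prob_space M" and f: "f \<in> L2 M M"
  shows "integrable M (\<lambda>x. (f x :: real^'n) $ i)"
  using L2_integrable[OF P L2_nth[OF subalg_refl f]] .

lemma cexp_nth: "cexp M G f x $ i = real_cond_exp M G (\<lambda>z. f z $ i) x"
  by (simp add: cexp_def)

lemma AE_vec:
  fixes u v :: "'s \<Rightarrow> real^'n"
  assumes "\<And>i. AE x in M. u x $ i = v x $ i"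
  shows "AE x in M. u x = v x"
proof -
  have "AE x in M. \<forall>i\<in>UNIV. u x $ i = v x $ i"
    by (rule AE_finite_allI) (simp_all add: assms)
  then show ?thesis by (rule AE_mp) (rule AE_I2, simp add: vec_eq_iff)
qed

lemma cexp_cong:
  fixes f g :: "'s \<Rightarrow> real^'n"
  assumes S: "sigma_finite_subalgebra M G" and [measurable]: "f \<in> borel_measurable M" "g \<in> borel_measurable M"
    and ae: "AE x in M. f x = g x"
  shows "AE x in M. cexp M G f x = cexp M G g x"
proof (rule AE_vec)
  fix i
  have "AE x in M. f x $ i = g x $ i" using ae by (rule AE_mp) (rule AE_I2, simp)
  then show "AE x in M. cexp M G f x $ i = cexp M G g x $ i"
    unfolding cexp_nth by (rule sigma_finite_subalgebra.real_cond_exp_cong[OF S]) (rule vec_nth_meas, fact)+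
qed

lemma cexp_add:
  fixes f g :: "'s \<Rightarrow> real^'n"
  assumes S: "sigma_finite_subalgebra M G"
    and f: "\<And>i. integrable M (\<lambda>x. f x $ i)" and g: "\<And>i. integrable M (\<lambda>x. g x $ i)"
  shows "AE x in M. cexp M G (\<lambda>x. f x + g x) x = cexp M G f x + cexp M G g x"
proof (rule AE_vec)
  fix i
  show "AE x in M. cexp M G (\<lambda>x. f x + g x) x $ i = (cexp M G f x + cexp M G g x) $ i"
    unfolding cexp_nth vector_add_component
    using sigma_finite_subalgebra.real_cond_exp_add[OF S f[of i] g[of i]] by simp
qed

lemma cexp_scale:
  fixes f :: "'s \<Rightarrow> real^'n"
  assumes S: "sigma_finite_subalgebra M G"
    and f: "\<And>i. integrable M (\<lambda>x. f x $ i)"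
  shows "AE x in M. cexp M G (\<lambda>x. c *\<^sub>R f x) x = c *\<^sub>R cexp M G f x"
proof (rule AE_vec)
  fix i
  show "AE x in M. cexp M G (\<lambda>x. c *\<^sub>R f x) x $ i = (c *\<^sub>R cexp M G f x) $ i"
    unfolding cexp_nth vector_scaleR_component
    using sigma_finite_subalgebra.real_cond_exp_cmult[OF S f[of i], of c] by simp
qed

lemma cexp_mv:
  fixes f :: "'s \<Rightarrow> real^'n" and A :: "real^'n^'m"
  assumes S: "sigma_finite_subalgebra M G"
    and f: "\<And>i. integrable M (\<lambda>x. f x $ i)"
  shows "AE x in M. cexp M G (\<lambda>x. A *v f x) x = A *v cexp M G f x"
proof (rule AE_vec)
  fix i
  have s: "AE x in M. real_cond_exp M G (\<lambda>x. \<Sum>j\<in>UNIV. A $ i $ j * f x $ j) x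
      = (\<Sum>j\<in>UNIV. real_cond_exp M G (\<lambda>x. A $ i $ j * f x $ j) x)"
    by (rule sigma_finite_subalgebra.real_cond_exp_sum[OF S]) (use f in simp)
  have "AE x in M. \<forall>j\<in>UNIV. real_cond_exp M G (\<lambda>x. A $ i $ j * f x $ j) x
      = A $ i $ j * real_cond_exp M G (\<lambda>x. f x $ j) x"
    by (rule AE_finite_allI) (simp_all add: sigma_finite_subalgebra.real_cond_exp_cmult[OF S f])
  then have "AE x in M. real_cond_exp M G (\<lambda>x. \<Sum>j\<in>UNIV. A $ i $ j * f x $ j) x
      = (\<Sum>j\<in>UNIV. A $ i $ j * real_cond_exp M G (\<lambda>x. f x $ j) x)"
    using s by (rule AE_mp[OF _ AE_mp]) (rule AE_I2, simp)
  moreover have eqf: "(\<lambda>z. (A *v f z) $ i) = (\<lambda>x. \<Sum>j\<in>UNIV. A $ i $ j * f x $ j)"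
    by (simp add: matrix_vector_mult_def)
  ultimately show "AE x in M. cexp M G (\<lambda>x. A *v f x) x $ i = (A *v cexp M G f x) $ i"
    unfolding cexp_nth eqf by (simp add: matrix_vector_mult_def cexp_nth)
qed

lemma cexp_L2:
  fixes f :: "'s \<Rightarrow> real^'n"
  assumes P: "prob_space M" and S: "sigma_finite_subalgebra M G" and f: "f \<in> L2 M M"
  shows "cexp M G f \<in> L2 M G"
proof -
  have G: "subalgebra M G" using S by (simp add: sigma_finite_subalgebra_def)
  have ci: "integrable M (\<lambda>x. (real_cond_exp M G (\<lambda>z. f z $ i) x)\<^sup>2)" for i
  proof (rule sigma_finite_subalgebra.integrable_convex_cond_exp[OF S, where I=UNIV and q=power2])
    show "integrable M (\<lambda>z. f z $ i)" by (rule L2_comp_int[OF P f])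
    show "integrable M (\<lambda>x. (f x $ i)\<^sup>2)"
      using L2_int[OF L2_nth[OF subalg_refl f, of i]] by simp
  qed (auto simp: convex_power2)
  have "integrable M (\<lambda>x. (norm (cexp M G f x))\<^sup>2)"
    unfolding norm2_vec cexp_nth by (rule Bochner_Integration.integrable_sum) (rule ci)
  moreover have "cexp M G f \<in> borel_measurable G" by (rule cexp_meas)
  ultimately show ?thesis by (simp add: L2_def)
qed

lemma cexp_dual:
  fixes f a :: "'s \<Rightarrow> real^'n"
  assumes S: "sigma_finite_subalgebra M G" and a: "a \<in> borel_measurable G" and f: "f \<in> borel_measurable M"
    and I: "\<And>i. integrable M (\<lambda>x. a x $ i * f x $ i)"
  shows "integrable M (\<lambda>x. a x \<bullet> cexp M G f x)"
    "(\<integral>x. a x \<bullet> cexp M G f x \<partial>M) = (\<integral>x. a x \<bullet> f x \<partial>M)"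
proof -
  have ai: "(\<lambda>x. a x $ i) \<in> borel_measurable G" for i using vec_nth_meas[OF a] .
  have fi: "(\<lambda>x. f x $ i) \<in> borel_measurable M" for i using vec_nth_meas[OF f] .
  note R = sigma_finite_subalgebra.real_cond_exp_intg[OF S I ai fi]
  show "integrable M (\<lambda>x. a x \<bullet> cexp M G f x)"
    unfolding inner_vec_def inner_real_def cexp_nth by (rule Bochner_Integration.integrable_sum) (rule R(1))
  have "(\<integral>x. a x \<bullet> cexp M G f x \<partial>M) = (\<Sum>i\<in>UNIV. \<integral>x. a x $ i * real_cond_exp M G (\<lambda>z. f z $ i) x \<partial>M)"
    unfolding inner_vec_def inner_real_def cexp_nth by (rule Bochner_Integration.integral_sum) (rule R(1))
  also have "\<dots> = (\<Sum>i\<in>UNIV. \<integral>x. a x $ i * f x $ i \<partial>M)"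
    by (simp add: R(2))
  also have "\<dots> = (\<integral>x. a x \<bullet> f x \<partial>M)"
    unfolding inner_vec_def inner_real_def by (rule Bochner_Integration.integral_sum[symmetric]) (rule I)
  finally show "(\<integral>x. a x \<bullet> cexp M G f x \<partial>M) = (\<integral>x. a x \<bullet> f x \<partial>M)" .
qed

context setting begin

lemma nn_w:
  assumes k: "k < N"
  shows "AE x in M. nn_cond_exp M (F k) (\<lambda>x. ennreal ((w k x)\<^sup>2)) x = 1"
proof -
  interpret S: sigma_finite_subalgebra M "F k" using sfs k by simp
  have e0: "(\<lambda>x. ennreal (- (w k x)\<^sup>2)) = (\<lambda>x. 0)"
    by (rule ext) (simp add: ennreal_neg)
  have z: "AE x in M. 0 = nn_cond_exp M (F k) (\<lambda>x. 0) x"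
    by (rule S.nn_cond_exp_F_meas) simp
  have v: "AE x in M. real_cond_exp M (F k) (\<lambda>z. (w k z)\<^sup>2) x = 1"
    using w_var k by blast
  show ?thesis
  proof (rule AE_mp[OF AE_conj_iff[THEN iffD2, OF conjI[OF z v]]], rule AE_I2, rule impI)
    fix x assume "0 = nn_cond_exp M (F k) (\<lambda>x. 0) x \<and> real_cond_exp M (F k) (\<lambda>z. (w k z)\<^sup>2) x = 1"
    then have "enn2real (nn_cond_exp M (F k) (\<lambda>x. ennreal ((w k x)\<^sup>2)) x) = 1"
      unfolding real_cond_exp_def e0 by (elim conjE) simp
    then show "nn_cond_exp M (F k) (\<lambda>x. ennreal ((w k x)\<^sup>2)) x = 1"
      by (cases "nn_cond_exp M (F k) (\<lambda>x. ennreal ((w k x)\<^sup>2)) x" rule: ennreal_cases) simp_all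
  qed
qed

lemma w_nn:
  assumes k: "k < N" and g[measurable]: "g \<in> borel_measurable (F k)"
  shows "(\<integral>\<^sup>+x. g x * ennreal ((w k x)\<^sup>2) \<partial>M) = (\<integral>\<^sup>+x. g x \<partial>M)"
proof -
  interpret S: sigma_finite_subalgebra M "F k" using sfs k by simp
  have wm: "w k \<in> borel_measurable M" using w_meas k by blast
  have "(\<integral>\<^sup>+x. g x * ennreal ((w k x)\<^sup>2) \<partial>M) = (\<integral>\<^sup>+x. g x * nn_cond_exp M (F k) (\<lambda>x. ennreal ((w k x)\<^sup>2)) x \<partial>M)"
    by (rule S.nn_cond_exp_intg[symmetric]) (use wm in measurable)
  also have "\<dots> = (\<integral>\<^sup>+x. g x \<partial>M)"
    by (rule nn_integral_cong_AE) (rule AE_mp[OF nn_w[OF k]], rule AE_I2, simp)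
  finally show ?thesis .
qed

lemma w_L2:
  fixes g :: "'a \<Rightarrow> real"
  assumes k: "k < N" and g[measurable]: "g \<in> borel_measurable (F k)" and gi: "integrable M (\<lambda>x. (g x)\<^sup>2)"
  shows "integrable M (\<lambda>x. (g x)\<^sup>2 * (w k x)\<^sup>2)" "(\<integral>x. (g x)\<^sup>2 * (w k x)\<^sup>2 \<partial>M) = (\<integral>x. (g x)\<^sup>2 \<partial>M)"
proof -
  have wm[measurable]: "w k \<in> borel_measurable M" using w_meas k by blast
  have gm[measurable]: "g \<in> borel_measurable M" using meas_M[of k g] k by simp
  have gm2: "(\<lambda>x. ennreal ((g x)\<^sup>2)) \<in> borel_measurable (F k)" by measurable
  have "(\<integral>\<^sup>+x. ennreal ((g x)\<^sup>2 * (w k x)\<^sup>2) \<partial>M) = (\<integral>\<^sup>+x. ennreal ((g x)\<^sup>2) * ennreal ((w k x)\<^sup>2) \<partial>M)"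
    by (simp add: ennreal_mult)
  also have "\<dots> = (\<integral>\<^sup>+x. ennreal ((g x)\<^sup>2) \<partial>M)"
    by (rule w_nn[OF k gm2])
  also have "\<dots> = ennreal (\<integral>x. (g x)\<^sup>2 \<partial>M)"
    by (rule nn_integral_eq_integral[OF gi]) simp
  finally have eq: "(\<integral>\<^sup>+x. ennreal ((g x)\<^sup>2 * (w k x)\<^sup>2) \<partial>M) = ennreal (\<integral>x. (g x)\<^sup>2 \<partial>M)" .
  show I: "integrable M (\<lambda>x. (g x)\<^sup>2 * (w k x)\<^sup>2)"
    by (rule integrableI_nonneg) (measurable, simp, simp add: eq)
  have "ennreal (\<integral>x. (g x)\<^sup>2 * (w k x)\<^sup>2 \<partial>M) = ennreal (\<integral>x. (g x)\<^sup>2 \<partial>M)"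
    using nn_integral_eq_integral[OF I] eq by simp
  then show "(\<integral>x. (g x)\<^sup>2 * (w k x)\<^sup>2 \<partial>M) = (\<integral>x. (g x)\<^sup>2 \<partial>M)"
    by (simp add: ennreal_inj integral_nonneg_AE)
qed

lemma wx_L2:
  fixes x :: "'a \<Rightarrow> real^'n"
  assumes k: "k < N" and x: "x \<in> L2 M (F k)"
  shows "(\<lambda>s. w k s *\<^sub>R x s) \<in> L2 M (F (Suc k))"
    "(\<integral>s. (norm (w k s *\<^sub>R x s))\<^sup>2 \<partial>M) = (\<integral>s. (norm (x s))\<^sup>2 \<partial>M)"
proof -
  have xm[measurable]: "x \<in> borel_measurable (F k)" using L2_meas[OF x] .
  have g: "(\<lambda>s. norm (x s)) \<in> borel_measurable (F k)" by measurable
  have gi: "integrable M (\<lambda>s. (norm (x s))\<^sup>2)" using L2_int[OF x] .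
  have eq: "(\<lambda>s. (norm (w k s *\<^sub>R x s))\<^sup>2) = (\<lambda>s. (norm (x s))\<^sup>2 * (w k s)\<^sup>2)"
    by (rule ext) (simp add: power_mult_distrib)
  have wF[measurable]: "w k \<in> borel_measurable (F (Suc k))" using w_F[OF k] .
  have xF[measurable]: "x \<in> borel_measurable (F (Suc k))" by (rule meas_mono[OF _ xm]) simp
  show "(\<lambda>s. w k s *\<^sub>R x s) \<in> L2 M (F (Suc k))"
    unfolding L2_def using w_L2(1)[OF k g gi] eq by simp
  show "(\<integral>s. (norm (w k s *\<^sub>R x s))\<^sup>2 \<partial>M) = (\<integral>s. (norm (x s))\<^sup>2 \<partial>M)"
    unfolding eq by (rule w_L2(2)[OF k g gi])
qed

end

context setting begin

lemma Z_L2: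
  fixes y :: "'a \<Rightarrow> real"
  assumes k: "k < N" and y: "y \<in> L2 M M"
  shows "real_cond_exp M (F k) (\<lambda>x. w k x * y x) \<in> L2 M (F k)"
proof -
  interpret S: sigma_finite_subalgebra M "F k" using sfs k by simp
  define Z where "Z = real_cond_exp M (F k) (\<lambda>x. w k x * y x)"
  have wm[measurable]: "w k \<in> borel_measurable M" using w_meas k by blast
  have ym[measurable]: "y \<in> borel_measurable M" using L2_meas[OF y] .
  have wL2: "w k \<in> L2 M M" unfolding L2_def using w_sq k wm by simp
  have wyI: "integrable M (\<lambda>x. w k x * y x)" by (rule L2_real_mult_int[OF wL2 y])
  have ZF[measurable]: "Z \<in> borel_measurable (F k)" unfolding Z_def by (rule borel_measurable_cond_exp)
  have ZM[measurable]: "Z \<in> borel_measurable M" unfolding Z_def by (rule borel_measurable_cond_exp2)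
  define Zn where "Zn n x = (if \<bar>Z x\<bar> \<le> real n then Z x else 0)" for n x
  have ZnF[measurable]: "Zn n \<in> borel_measurable (F k)" for n unfolding Zn_def by measurable
  have ZnM[measurable]: "Zn n \<in> borel_measurable M" for n by (rule meas_M[OF _ ZnF]) (use k in simp)
  have Znb: "\<bar>Zn n x\<bar> \<le> real n" for n x unfolding Zn_def by simp
  have yi: "integrable M (\<lambda>x. (y x)\<^sup>2)" using L2_int[OF y] by simp
  have bound: "(\<integral>x. (Zn n x)\<^sup>2 \<partial>M) \<le> (\<integral>x. (y x)\<^sup>2 \<partial>M)" for n
  proof -
    have nwy: "integrable M (\<lambda>x. real n * (w k x * y x))" using wyI by simp
    have I1: "integrable M (\<lambda>x. Zn n x * (w k x * y x))"
    proof (rule Bochner_Integration.integrable_bound[OF nwy], measurable, rule AE_I2)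
      fix x
      have "\<bar>Zn n x\<bar> * \<bar>w k x * y x\<bar> \<le> real n * \<bar>w k x * y x\<bar>"
        by (rule mult_right_mono[OF Znb]) simp
      then show "norm (Zn n x * (w k x * y x)) \<le> norm (real n * (w k x * y x))"
        by (simp add: abs_mult)
    qed
    have E1: "(\<integral>x. Zn n x * Z x \<partial>M) = (\<integral>x. Zn n x * (w k x * y x) \<partial>M)"
      unfolding Z_def by (rule S.real_cond_exp_intg(2)[OF I1]) measurable
    have sq: "(\<lambda>x. Zn n x * Z x) = (\<lambda>x. (Zn n x)\<^sup>2)"
      unfolding Zn_def by (rule ext) (simp add: power2_eq_square)
    have Zn2i: "integrable M (\<lambda>x. (Zn n x)\<^sup>2)"
    proof (rule int_bound_real[where f="\<lambda>x. (real n)\<^sup>2"])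
      show "integrable M (\<lambda>x. (real n)\<^sup>2)" by simp
      show "(\<lambda>x. (Zn n x)\<^sup>2) \<in> borel_measurable M" by measurable
      show "0 \<le> (Zn n x)\<^sup>2" for x by simp
      show "(Zn n x)\<^sup>2 \<le> (real n)\<^sup>2" for x
        using power_mono[OF Znb[of n x], of 2] by simp
    qed
    note W = w_L2[OF k ZnF Zn2i]
    have pw: "2 * (Zn n x * (w k x * y x)) \<le> (Zn n x)\<^sup>2 * (w k x)\<^sup>2 + (y x)\<^sup>2" for x
    proof -
      have "0 \<le> (Zn n x * w k x - y x)\<^sup>2" by simp
      moreover have "(Zn n x * w k x - y x)\<^sup>2 = (Zn n x)\<^sup>2 * (w k x)\<^sup>2 + (y x)\<^sup>2 - 2 * (Zn n x * (w k x * y x))"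
        by (simp add: power2_eq_square algebra_simps) 
      ultimately show ?thesis by linarith
    qed
    have "(\<integral>x. 2 * (Zn n x * (w k x * y x)) \<partial>M) \<le> (\<integral>x. (Zn n x)\<^sup>2 * (w k x)\<^sup>2 + (y x)\<^sup>2 \<partial>M)"
    proof (rule Bochner_Integration.integral_mono)
      show "integrable M (\<lambda>x. 2 * (Zn n x * (w k x * y x)))"
        by (rule integrable_mult_right) (rule I1)
      show "integrable M (\<lambda>x. (Zn n x)\<^sup>2 * (w k x)\<^sup>2 + (y x)\<^sup>2)"
        by (rule Bochner_Integration.integrable_add[OF W(1) yi])
    qed (rule pw)
    also have "\<dots> = (\<integral>x. (Zn n x)\<^sup>2 * (w k x)\<^sup>2 \<partial>M) + (\<integral>x. (y x)\<^sup>2 \<partial>M)"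
      by (rule Bochner_Integration.integral_add[OF W(1) yi])
    also have "\<dots> = (\<integral>x. (Zn n x)\<^sup>2 \<partial>M) + (\<integral>x. (y x)\<^sup>2 \<partial>M)"
      unfolding W(2) ..
    finally have "2 * (\<integral>x. (Zn n x)\<^sup>2 \<partial>M) \<le> (\<integral>x. (Zn n x)\<^sup>2 \<partial>M) + (\<integral>x. (y x)\<^sup>2 \<partial>M)"
      using E1 sq by simp
    then show ?thesis by simp
  qed
  define f where "f n x = ennreal ((Zn n x)\<^sup>2)" for n x
  have fm[measurable]: "f n \<in> borel_measurable M" for n unfolding f_def by measurable
  have inc: "incseq f"
  proof (rule incseq_SucI, rule le_funI)
    fix n x
    show "f n x \<le> f (Suc n) x" unfolding f_def Zn_def
      by (rule ennreal_leI) (cases "\<bar>Z x\<bar> \<le> real n"; cases "\<bar>Z x\<bar> \<le> real (Suc n)"; simp) 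
  qed
  have sup: "(SUP n. f n x) = ennreal ((Z x)\<^sup>2)" for x
  proof (rule antisym)
    show "(SUP n. f n x) \<le> ennreal ((Z x)\<^sup>2)"
    proof (rule SUP_least)
      fix n
      show "f n x \<le> ennreal ((Z x)\<^sup>2)"
        unfolding f_def Zn_def by (rule ennreal_leI) (cases "\<bar>Z x\<bar> \<le> real n", simp_all) 
    qed
    have "\<bar>Z x\<bar> \<le> real (nat \<lceil>\<bar>Z x\<bar>\<rceil>)" by linarith
    then have eqn: "f (nat \<lceil>\<bar>Z x\<bar>\<rceil>) x = ennreal ((Z x)\<^sup>2)" unfolding f_def Zn_def by simp
    show "ennreal ((Z x)\<^sup>2) \<le> (SUP n. f n x)"
      unfolding eqn[symmetric] by (rule SUP_upper) simp
  qed
  have "(\<integral>\<^sup>+x. ennreal ((Z x)\<^sup>2) \<partial>M) = (SUP n. \<integral>\<^sup>+x. f n x \<partial>M)"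
    using nn_integral_monotone_convergence_SUP[OF inc fm] sup by simp
  also have "\<dots> \<le> ennreal (\<integral>x. (y x)\<^sup>2 \<partial>M)"
  proof (rule SUP_least)
    fix n
    have Zn2i: "integrable M (\<lambda>x. (Zn n x)\<^sup>2)"
    proof (rule int_bound_real[where f="\<lambda>x. (real n)\<^sup>2"])
      show "integrable M (\<lambda>x. (real n)\<^sup>2)" by simp
      show "(\<lambda>x. (Zn n x)\<^sup>2) \<in> borel_measurable M" by measurable
      show "0 \<le> (Zn n x)\<^sup>2" for x by simp
      show "(Zn n x)\<^sup>2 \<le> (real n)\<^sup>2" for x
        using power_mono[OF Znb[of n x], of 2] by simp
    qed
    have "(\<integral>\<^sup>+x. f n x \<partial>M) = ennreal (\<integral>x. (Zn n x)\<^sup>2 \<partial>M)"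
      unfolding f_def by (rule nn_integral_eq_integral[OF Zn2i]) simp
    also have "\<dots> \<le> ennreal (\<integral>x. (y x)\<^sup>2 \<partial>M)" by (rule ennreal_leI[OF bound])
    finally show "(\<integral>\<^sup>+x. f n x \<partial>M) \<le> ennreal (\<integral>x. (y x)\<^sup>2 \<partial>M)" .
  qed
  finally have "(\<integral>\<^sup>+x. ennreal ((Z x)\<^sup>2) \<partial>M) < \<infinity>"
    by (rule le_less_trans) simp
  moreover have Zm2: "(\<lambda>x. (Z x)\<^sup>2) \<in> borel_measurable M" by measurable
  ultimately have "integrable M (\<lambda>x. (Z x)\<^sup>2)"
    by (intro integrableI_nonneg[OF Zm2]) (rule AE_I2, simp, simp)
  then show ?thesis unfolding Z_def[symmetric] L2_def using ZF by simp
qed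

lemma cexpw_L2:
  fixes y :: "'a \<Rightarrow> real^'n"
  assumes k: "k < N" and y: "y \<in> L2 M M"
  shows "cexp M (F k) (\<lambda>z. w k z *\<^sub>R y z) \<in> L2 M (F k)"
proof -
  have c: "(\<lambda>x. real_cond_exp M (F k) (\<lambda>z. w k z * y z $ i) x) \<in> L2 M (F k)" for i
    using Z_L2[OF k L2_nth[OF subalg_refl y]] by simp
  have "integrable M (\<lambda>x. (norm (cexp M (F k) (\<lambda>z. w k z *\<^sub>R y z) x))\<^sup>2)"
    unfolding norm2_vec cexp_nth
    by (rule Bochner_Integration.integrable_sum) (use L2_int[OF c] in simp)
  then show ?thesis unfolding L2_def by simp
qed

end

primrec Yr :: "'a measure \<Rightarrow> (nat \<Rightarrow> 'a \<Rightarrow> real) \<Rightarrow> nat \<Rightarrow>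
   (nat \<Rightarrow> real^'n^'n) \<Rightarrow> (nat \<Rightarrow> real^'m^'n) \<Rightarrow> (nat \<Rightarrow> real^'n^'n) \<Rightarrow>
   (nat \<Rightarrow> 'a \<Rightarrow> real^'n) \<Rightarrow> ('a \<Rightarrow> real^'n) \<Rightarrow> (nat \<Rightarrow> 'a \<Rightarrow> real^'m) \<Rightarrow> nat \<Rightarrow> 'a \<Rightarrow> real^'n" where
  "Yr M w N A B C q \<xi> u 0 = \<xi>"
| "Yr M w N A B C q \<xi> u (Suc m) = (\<lambda>x.
     A (N - Suc m) *v cexp M (filt M w (N - Suc m)) (Yr M w N A B C q \<xi> u m) x + B (N - Suc m) *v u (N - Suc m) x
     + C (N - Suc m) *v cexp M (filt M w (N - Suc m)) (\<lambda>z. w (N - Suc m) z *\<^sub>R Yr M w N A B C q \<xi> u m z) x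
     + q (N - Suc m) x)"

context setting begin

lemma subalgF: "j \<le> k \<Longrightarrow> subalgebra (F k) (F j)"
  by (simp add: subalgebra_def F_mono)

lemma L2F_L2: "h \<in> L2F M w N \<Longrightarrow> k < N \<Longrightarrow> h k \<in> L2 M (F k)"
  by (simp add: L2F_def)

lemma L2_FM: "k \<le> N \<Longrightarrow> f \<in> L2 M (F k) \<Longrightarrow> f \<in> L2 M M"
  by (rule L2_sub[OF subalg])

lemma rhs_L2:
  fixes A C :: "nat \<Rightarrow> real^'n^'n" and B :: "nat \<Rightarrow> real^'m^'n"
  assumes k: "k < N" and y: "y \<in> L2 M M" and u: "u \<in> L2 M (F k)" and q: "q \<in> L2 M (F k)"
  shows "(\<lambda>x. A k *v cexp M (F k) y x + B k *v u x + C k *v cexp M (F k) (\<lambda>z. w k z *\<^sub>R y z) x + q x) \<in> L2 M (F k)"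
proof -
  have G: "subalgebra M (F k)" using subalg k by simp
  have S: "sigma_finite_subalgebra M (F k)" using sfs k by simp
  have c1: "(\<lambda>x. A k *v cexp M (F k) y x) \<in> L2 M (F k)"
    by (rule L2_mv[OF G cexp_L2[OF prob_space_axioms S y]])
  have c2: "(\<lambda>x. B k *v u x) \<in> L2 M (F k)" by (rule L2_mv[OF G u])
  have c3: "(\<lambda>x. C k *v cexp M (F k) (\<lambda>z. w k z *\<^sub>R y z) x) \<in> L2 M (F k)"
    by (rule L2_mv[OF G cexpw_L2[OF k y]])
  show ?thesis by (intro L2_add[OF G] c1 c2 c3 q)
qed

lemma Yr_L2:
  fixes A C :: "nat \<Rightarrow> real^'n^'n" and B :: "nat \<Rightarrow> real^'m^'n"
  assumes q: "q \<in> L2F M w N" and xi: "\<xi> \<in> L2 M (F N)" and u: "u \<in> L2F M w N"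
  shows "m \<le> N \<Longrightarrow> Yr M w N A B C q \<xi> u m \<in> L2 M (F (N - m))"
proof (induction m)
  case 0
  then show ?case using xi by simp
next
  case (Suc m)
  define k where "k = N - Suc m"
  have k: "k < N" and km: "N - m = Suc k" using Suc.prems unfolding k_def by auto
  have y: "Yr M w N A B C q \<xi> u m \<in> L2 M M"
    using L2_FM[OF _ Suc.IH] Suc.prems by simp
  show ?case unfolding Yr.simps k_def[symmetric]
    using rhs_L2[OF k y L2F_L2[OF u k] L2F_L2[OF q k]] by simp
qed

lemma state_exists:
  fixes A C :: "nat \<Rightarrow> real^'n^'n" and B :: "nat \<Rightarrow> real^'m^'n"
  assumes q: "q \<in> L2F M w N" and xi: "\<xi> \<in> L2 M (F N)" and u: "u \<in> L2F M w N"
  shows "is_state M w N A B C q \<xi> u (\<lambda>k. Yr M w N A B C q \<xi> u (N - k))"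
  unfolding is_state_def
proof (intro conjI allI impI)
  fix k assume k: "k \<le> N"
  have "Yr M w N A B C q \<xi> u (N - k) \<in> L2 M (F (N - (N - k)))"
    by (rule Yr_L2[OF q xi u]) simp
  then have "Yr M w N A B C q \<xi> u (N - k) \<in> L2 M (F k)" using k by simp
  then show "Yr M w N A B C q \<xi> u (N - k) \<in> L2 M (F (min (Suc k) N))"
    by (rule L2_mono[OF subalgF, rotated]) (use k in simp)
next
  fix k assume k: "k < N"
  have e: "N - k = Suc (N - Suc k)" "N - Suc (N - Suc k) = k" "N - (Suc k) = N - Suc k" using k by auto
  show "AE x in M. Yr M w N A B C q \<xi> u (N - k) x =
         A k *v cexp M (F k) (Yr M w N A B C q \<xi> u (N - Suc k)) x + B k *v u k x +
         C k *v cexp M (F k) (\<lambda>z. w k z *\<^sub>R Yr M w N A B C q \<xi> u (N - Suc k) z) x + q k x"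
    unfolding e(1) Yr.simps e(2) by simp
qed simp

lemma state_L2:
  "is_state M w N A B C q \<xi> u y \<Longrightarrow> k \<le> N \<Longrightarrow> y k \<in> L2 M M"
  unfolding is_state_def by (rule L2_FM[of "min (Suc k) N"]) auto

lemma state_unique:
  fixes A C :: "nat \<Rightarrow> real^'n^'n" and B :: "nat \<Rightarrow> real^'m^'n"
  assumes y: "is_state M w N A B C q \<xi> u y" and y': "is_state M w N A B C q \<xi> u y'"
  shows "k \<le> N \<Longrightarrow> AE x in M. y k x = y' k x"
proof -
  have "m \<le> N \<Longrightarrow> AE x in M. y (N - m) x = y' (N - m) x" for m
  proof (induction m)
    case 0
    have a: "AE x in M. y N x = \<xi> x" using y unfolding is_state_def by blast
    have b: "AE x in M. y' N x = \<xi> x" using y' unfolding is_state_def by blast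
    have "AE x in M. y N x = y' N x" by (rule AE_mp[OF a AE_mp[OF b]], rule AE_I2, simp)
    then show ?case by simp
  next
    case (Suc m)
    define k where "k = N - Suc m"
    have k: "k < N" and km: "N - m = Suc k" using Suc.prems unfolding k_def by auto
    have S: "sigma_finite_subalgebra M (F k)" using sfs k by simp
    have IH: "AE x in M. y (Suc k) x = y' (Suc k) x" using Suc.IH Suc.prems km by simp
    have m1[measurable]: "y (Suc k) \<in> borel_measurable M" using L2_meas[OF state_L2[OF y]] k by simp
    have m2[measurable]: "y' (Suc k) \<in> borel_measurable M" using L2_meas[OF state_L2[OF y']] k by simp
    have wm[measurable]: "w k \<in> borel_measurable M" using w_meas k by blast
    have c1: "AE x in M. cexp M (F k) (y (Suc k)) x = cexp M (F k) (y' (Suc k)) x"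
      by (rule cexp_cong[OF S m1 m2 IH])
    have c2: "AE x in M. cexp M (F k) (\<lambda>z. w k z *\<^sub>R y (Suc k) z) x = cexp M (F k) (\<lambda>z. w k z *\<^sub>R y' (Suc k) z) x"
      by (rule cexp_cong[OF S]) (measurable, rule AE_mp[OF IH], rule AE_I2, simp)
    have e1: "AE x in M. y k x = A k *v cexp M (F k) (y (Suc k)) x + B k *v u k x +
         C k *v cexp M (F k) (\<lambda>z. w k z *\<^sub>R y (Suc k) z) x + q k x"
      using y k unfolding is_state_def by blast
    have e2: "AE x in M. y' k x = A k *v cexp M (F k) (y' (Suc k)) x + B k *v u k x +
         C k *v cexp M (F k) (\<lambda>z. w k z *\<^sub>R y' (Suc k) z) x + q k x"
      using y' k unfolding is_state_def by blast
    have "AE x in M. y k x = y' k x"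
      by (rule AE_mp[OF c1 AE_mp[OF c2 AE_mp[OF e1 AE_mp[OF e2]]]], rule AE_I2, simp)
    then show ?case unfolding k_def[symmetric] .
  qed
  then show "k \<le> N \<Longrightarrow> AE x in M. y k x = y' k x"
    by (metis diff_diff_cancel diff_le_self)
qed

end

lemma cexp_measM: "cexp M G f \<in> borel_measurable M"
  unfolding cexp_def by (rule vec_meas) simp

definition trm :: "real^'n^'n \<Rightarrow> real^'n^'m \<Rightarrow> real^'m^'m \<Rightarrow> real^'n \<Rightarrow> real^'m \<Rightarrow> real^'n \<Rightarrow> real^'m \<Rightarrow> real" where
  "trm Q S R e r yb uu = (Q *v yb) \<bullet> yb + 2 * ((S *v yb) \<bullet> uu) + (R *v uu) \<bullet> uu + 2 * (e \<bullet> yb) + 2 * (r \<bullet> uu)"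

lemma trm_meas[measurable (raw)]:
  assumes "e \<in> borel_measurable M" "r \<in> borel_measurable M" "a \<in> borel_measurable M" "b \<in> borel_measurable M"
  shows "(\<lambda>x. trm Q S R (e x) (r x) (a x) (b x)) \<in> borel_measurable M"
  unfolding trm_def using assms by measurable

lemma cost_trm: "cost M w N G0 Q S R \<eta> \<rho> y u = 1/2 * (\<integral>x. (G0 *v y 0 x) \<bullet> y 0 x +
    (\<Sum>k<N. trm (Q k) (S k) (R k) (\<eta> k x) (\<rho> k x) (cexp M (filt M w k) (y (Suc k)) x) (u k x)) \<partial>M)"
  unfolding cost_def trm_def Let_def ..

context setting begin

lemma integrand_meas:
  fixes y :: "nat \<Rightarrow> 'a \<Rightarrow> real^'n" and u \<rho> :: "nat \<Rightarrow> 'a \<Rightarrow> real^'m" and \<eta> :: "nat \<Rightarrow> 'a \<Rightarrow> real^'n"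
  assumes y0[measurable]: "y 0 \<in> borel_measurable M" and u: "\<And>k. k < N \<Longrightarrow> u k \<in> borel_measurable M"
    and e: "\<And>k. k < N \<Longrightarrow> \<eta> k \<in> borel_measurable M" and r: "\<And>k. k < N \<Longrightarrow> \<rho> k \<in> borel_measurable M"
  shows "(\<lambda>x. (G0 *v y 0 x) \<bullet> y 0 x +
    (\<Sum>k<N. trm (Q k) (S k) (R k) (\<eta> k x) (\<rho> k x) (cexp M (F k) (y (Suc k)) x) (u k x))) \<in> borel_measurable M"
proof (rule borel_measurable_add)
  show "(\<lambda>x. (G0 *v y 0 x) \<bullet> y 0 x) \<in> borel_measurable M" by measurable
  show "(\<lambda>x. \<Sum>k<N. trm (Q k) (S k) (R k) (\<eta> k x) (\<rho> k x) (cexp M (F k) (y (Suc k)) x) (u k x)) \<in> borel_measurable M"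
  proof (rule borel_measurable_sum)
    fix k assume "k \<in> {..<N}"
    then have k: "k < N" by simp
    show "(\<lambda>x. trm (Q k) (S k) (R k) (\<eta> k x) (\<rho> k x) (cexp M (F k) (y (Suc k)) x) (u k x)) \<in> borel_measurable M"
      by (rule trm_meas[OF e[OF k] r[OF k] cexp_measM u[OF k]])
  qed
qed

lemma cost_cong:
  fixes y y' :: "nat \<Rightarrow> 'a \<Rightarrow> real^'n" and u \<rho> :: "nat \<Rightarrow> 'a \<Rightarrow> real^'m" and \<eta> :: "nat \<Rightarrow> 'a \<Rightarrow> real^'n"
  assumes ae: "\<And>k. k \<le> N \<Longrightarrow> AE x in M. y k x = y' k x"
    and my: "\<And>k. k \<le> N \<Longrightarrow> y k \<in> borel_measurable M" and my': "\<And>k. k \<le> N \<Longrightarrow> y' k \<in> borel_measurable M"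
    and u: "\<And>k. k < N \<Longrightarrow> u k \<in> borel_measurable M"
    and e: "\<And>k. k < N \<Longrightarrow> \<eta> k \<in> borel_measurable M" and r: "\<And>k. k < N \<Longrightarrow> \<rho> k \<in> borel_measurable M"
  shows "cost M w N G0 Q S R \<eta> \<rho> y u = cost M w N G0 Q S R \<eta> \<rho> y' u"
  unfolding cost_trm
proof (rule arg_cong[where f="\<lambda>t. 1/2 * t"], rule integral_cong_AE)
  show "(\<lambda>x. (G0 *v y 0 x) \<bullet> y 0 x +
    (\<Sum>k<N. trm (Q k) (S k) (R k) (\<eta> k x) (\<rho> k x) (cexp M (F k) (y (Suc k)) x) (u k x))) \<in> borel_measurable M"
    by (rule integrand_meas[OF my u e r]) simp
  show "(\<lambda>x. (G0 *v y' 0 x) \<bullet> y' 0 x +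
    (\<Sum>k<N. trm (Q k) (S k) (R k) (\<eta> k x) (\<rho> k x) (cexp M (F k) (y' (Suc k)) x) (u k x))) \<in> borel_measurable M"
    by (rule integrand_meas[OF my' u e r]) simp
  have a0: "AE x in M. y 0 x = y' 0 x" using ae by simp
  have a1: "AE x in M. \<forall>k\<in>{..<N}. cexp M (F k) (y (Suc k)) x = cexp M (F k) (y' (Suc k)) x"
  proof (rule AE_finite_allI)
    fix k assume "k \<in> {..<N}"
    then have k: "k < N" by simp
    show "AE x in M. cexp M (F k) (y (Suc k)) x = cexp M (F k) (y' (Suc k)) x"
      by (rule cexp_cong[OF sfs my my' ae]) (use k in simp_all)
  qed simp
  show "AE x in M. (G0 *v y 0 x) \<bullet> y 0 x +
    (\<Sum>k<N. trm (Q k) (S k) (R k) (\<eta> k x) (\<rho> k x) (cexp M (F k) (y (Suc k)) x) (u k x)) =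
    (G0 *v y' 0 x) \<bullet> y' 0 x +
    (\<Sum>k<N. trm (Q k) (S k) (R k) (\<eta> k x) (\<rho> k x) (cexp M (F k) (y' (Suc k)) x) (u k x))"
    by (rule AE_mp[OF a0 AE_mp[OF a1]], rule AE_I2, simp)
qed

lemma L2F_measM: "h \<in> L2F M w N \<Longrightarrow> k < N \<Longrightarrow> h k \<in> borel_measurable M"
  using L2_meas[OF L2_FM[OF _ L2F_L2]] by (metis less_imp_le_nat)

lemma J_eq:
  fixes A C :: "nat \<Rightarrow> real^'n^'n" and B :: "nat \<Rightarrow> real^'m^'n"
    and u \<rho> :: "nat \<Rightarrow> 'a \<Rightarrow> real^'m" and \<eta> :: "nat \<Rightarrow> 'a \<Rightarrow> real^'n"
  assumes y: "is_state M w N A B C q \<xi> u y"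
    and u: "u \<in> L2F M w N" and e: "\<eta> \<in> L2F M w N" and r: "\<rho> \<in> L2F M w N"
  shows "J M w N A B C q G0 Q S R \<eta> \<rho> \<xi> u = cost M w N G0 Q S R \<eta> \<rho> y u"
proof -
  define y' where "y' = (SOME y. is_state M w N A B C q \<xi> u y)"
  have y': "is_state M w N A B C q \<xi> u y'" unfolding y'_def by (rule someI[of _ y]) (rule y)
  have "cost M w N G0 Q S R \<eta> \<rho> y' u = cost M w N G0 Q S R \<eta> \<rho> y u"
  proof (rule cost_cong)
    show "AE x in M. y' k x = y k x" if "k \<le> N" for k by (rule state_unique[OF y' y that])
    show "y' k \<in> borel_measurable M" if "k \<le> N" for k using L2_meas[OF state_L2[OF y' that]] .
    show "y k \<in> borel_measurable M" if "k \<le> N" for k using L2_meas[OF state_L2[OF y that]] .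
  qed (use L2F_measM u e r in auto)
  then show ?thesis unfolding J_def y'_def[symmetric] .
qed

end

context setting begin

lemma w_L2M: "k < N \<Longrightarrow> w k \<in> L2 M M"
  unfolding L2_def using w_sq w_meas by simp

lemma wy_int: "k < N \<Longrightarrow> y \<in> L2 M M \<Longrightarrow> integrable M (\<lambda>z. (w k z *\<^sub>R (y z :: real^'n)) $ i)"
  using L2_real_mult_int[OF w_L2M L2_nth[OF subalg_refl, where f=y and i=i]] by simp

lemma comp_int: "y \<in> L2 M M \<Longrightarrow> integrable M (\<lambda>z. (y z :: real^'n) $ i)"
  by (rule L2_comp_int[OF prob_space_axioms])

lemma state_add:
  fixes A C :: "nat \<Rightarrow> real^'n^'n" and B :: "nat \<Rightarrow> real^'m^'n"
  assumes y: "is_state M w N A B C q \<xi> u y" and d: "is_state M w N A B C (\<lambda>k x. 0) (\<lambda>x. 0) v d"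
  shows "is_state M w N A B C q \<xi> (\<lambda>k x. u k x + v k x) (\<lambda>k x. y k x + d k x)"
  unfolding is_state_def
proof (intro conjI allI impI)
  fix k assume k: "k \<le> N"
  show "(\<lambda>x. y k x + d k x) \<in> L2 M (F (min (Suc k) N))"
    by (rule L2_add[OF subalg]) (use y d k in \<open>auto simp: is_state_def\<close>)
next
  fix k assume k: "k < N"
  have S: "sigma_finite_subalgebra M (F k)" using sfs k by simp
  have y1: "y (Suc k) \<in> L2 M M" using state_L2[OF y] k by simp
  have d1: "d (Suc k) \<in> L2 M M" using state_L2[OF d] k by simp
  have c1: "AE x in M. cexp M (F k) (\<lambda>x. y (Suc k) x + d (Suc k) x) x = cexp M (F k) (y (Suc k)) x + cexp M (F k) (d (Suc k)) x"
    by (rule cexp_add[OF S comp_int[OF y1] comp_int[OF d1]])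
  have c2: "AE x in M. cexp M (F k) (\<lambda>x. w k x *\<^sub>R y (Suc k) x + w k x *\<^sub>R d (Suc k) x) x
      = cexp M (F k) (\<lambda>x. w k x *\<^sub>R y (Suc k) x) x + cexp M (F k) (\<lambda>x. w k x *\<^sub>R d (Suc k) x) x"
    by (rule cexp_add[OF S wy_int[OF k y1] wy_int[OF k d1]])
  have eq: "(\<lambda>z. w k z *\<^sub>R (y (Suc k) z + d (Suc k) z)) = (\<lambda>x. w k x *\<^sub>R y (Suc k) x + w k x *\<^sub>R d (Suc k) x)"
    by (simp add: scaleR_add_right)
  have e1: "AE x in M. y k x = A k *v cexp M (F k) (y (Suc k)) x + B k *v u k x +
         C k *v cexp M (F k) (\<lambda>z. w k z *\<^sub>R y (Suc k) z) x + q k x"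
    using y k unfolding is_state_def by blast
  have e2: "AE x in M. d k x = A k *v cexp M (F k) (d (Suc k)) x + B k *v v k x +
         C k *v cexp M (F k) (\<lambda>z. w k z *\<^sub>R d (Suc k) z) x + 0"
    using d k unfolding is_state_def by blast
  show "AE x in M. y k x + d k x =
         A k *v cexp M (F k) (\<lambda>x. y (Suc k) x + d (Suc k) x) x + B k *v (u k x + v k x) +
         C k *v cexp M (F k) (\<lambda>z. w k z *\<^sub>R (y (Suc k) z + d (Suc k) z)) x + q k x"
    unfolding eq
    by (rule AE_mp[OF c1 AE_mp[OF c2 AE_mp[OF e1 AE_mp[OF e2]]]], rule AE_I2)
       (simp add: matrix_vector_right_distrib algebra_simps)
next
  have a: "AE x in M. y N x = \<xi> x" using y unfolding is_state_def by blast
  have b: "AE x in M. d N x = 0" using d unfolding is_state_def by blast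
  show "AE x in M. y N x + d N x = \<xi> x" by (rule AE_mp[OF a AE_mp[OF b]], rule AE_I2, simp)
qed

lemma state_scale:
  fixes A C :: "nat \<Rightarrow> real^'n^'n" and B :: "nat \<Rightarrow> real^'m^'n"
  assumes d: "is_state M w N A B C (\<lambda>k x. 0) (\<lambda>x. 0) v d"
  shows "is_state M w N A B C (\<lambda>k x. 0) (\<lambda>x. 0) (\<lambda>k x. t *\<^sub>R v k x) (\<lambda>k x. t *\<^sub>R d k x)"
  unfolding is_state_def
proof (intro conjI allI impI)
  fix k assume k: "k \<le> N"
  show "(\<lambda>x. t *\<^sub>R d k x) \<in> L2 M (F (min (Suc k) N))"
    by (rule L2_scale[OF subalg]) (use d k in \<open>auto simp: is_state_def\<close>)
next
  fix k assume k: "k < N"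
  have S: "sigma_finite_subalgebra M (F k)" using sfs k by simp
  have d1: "d (Suc k) \<in> L2 M M" using state_L2[OF d] k by simp
  have c1: "AE x in M. cexp M (F k) (\<lambda>x. t *\<^sub>R d (Suc k) x) x = t *\<^sub>R cexp M (F k) (d (Suc k)) x"
    by (rule cexp_scale[OF S comp_int[OF d1]])
  have c2: "AE x in M. cexp M (F k) (\<lambda>x. t *\<^sub>R (w k x *\<^sub>R d (Suc k) x)) x
      = t *\<^sub>R cexp M (F k) (\<lambda>x. w k x *\<^sub>R d (Suc k) x) x"
    by (rule cexp_scale[OF S wy_int[OF k d1]])
  have eq: "(\<lambda>z. w k z *\<^sub>R (t *\<^sub>R d (Suc k) z)) = (\<lambda>x. t *\<^sub>R (w k x *\<^sub>R d (Suc k) x))"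
    by (simp add: mult.commute)
  have e2: "AE x in M. d k x = A k *v cexp M (F k) (d (Suc k)) x + B k *v v k x +
         C k *v cexp M (F k) (\<lambda>z. w k z *\<^sub>R d (Suc k) z) x + 0"
    using d k unfolding is_state_def by blast
  show "AE x in M. t *\<^sub>R d k x =
         A k *v cexp M (F k) (\<lambda>x. t *\<^sub>R d (Suc k) x) x + B k *v (t *\<^sub>R v k x) +
         C k *v cexp M (F k) (\<lambda>z. w k z *\<^sub>R (t *\<^sub>R d (Suc k) z)) x + 0"
    unfolding eq
    by (rule AE_mp[OF c1 AE_mp[OF c2 AE_mp[OF e2]]], rule AE_I2)
       (simp add: matrix_vector_right_distrib algebra_simps matrix_vector_mult_scaleR scaleR_right_distrib)
next
  have b: "AE x in M. d N x = 0" using d unfolding is_state_def by blast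
  show "AE x in M. t *\<^sub>R d N x = 0" by (rule AE_mp[OF b], rule AE_I2, simp)
qed

end

lemma int_inner_cong_right:
  fixes h f g :: "'s \<Rightarrow> 'v::euclidean_space"
  assumes [measurable]: "h \<in> borel_measurable M" "f \<in> borel_measurable M" "g \<in> borel_measurable M"
    and ae: "AE x in M. f x = g x"
  shows "(\<integral>x. h x \<bullet> f x \<partial>M) = (\<integral>x. h x \<bullet> g x \<partial>M)"
  by (rule integral_cong_AE) (measurable, rule AE_mp[OF ae], rule AE_I2, simp)

lemma int_inner_cong_left:
  fixes h f g :: "'s \<Rightarrow> 'v::euclidean_space"
  assumes [measurable]: "h \<in> borel_measurable M" "f \<in> borel_measurable M" "g \<in> borel_measurable M"
    and ae: "AE x in M. f x = g x"
  shows "(\<integral>x. f x \<bullet> h x \<partial>M) = (\<integral>x. g x \<bullet> h x \<partial>M)"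
  by (rule integral_cong_AE) (measurable, rule AE_mp[OF ae], rule AE_I2, simp)

lemma int_add3:
  fixes f g h :: "'s \<Rightarrow> real"
  assumes "integrable M f" "integrable M g" "integrable M h"
  shows "(\<integral>x. f x + g x + h x \<partial>M) = (\<integral>x. f x \<partial>M) + (\<integral>x. g x \<partial>M) + (\<integral>x. h x \<partial>M)"
  using assms by (simp add: Bochner_Integration.integral_add)

context setting begin

lemma dual_comp_int:
  fixes a f :: "'a \<Rightarrow> real^'n"
  shows "a \<in> L2 M M \<Longrightarrow> f \<in> L2 M M \<Longrightarrow> integrable M (\<lambda>x. a x $ i * f x $ i)"
  by (rule L2_real_mult_int) (rule L2_nth[OF subalg_refl], assumption)+

lemma tele:
  fixes A C :: "real^'n^'n" and B :: "real^'m^'n"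
    and xk x' dk d' p :: "'a \<Rightarrow> real^'n" and v :: "'a \<Rightarrow> real^'m"
  assumes k: "k < N"
    and xk: "xk \<in> L2 M (F k)" and x': "x' \<in> L2 M M" and p: "p \<in> L2 M (F k)"
    and ex: "AE s in M. x' s = transpose A *v xk s + p s + w k s *\<^sub>R (transpose C *v xk s)"
    and dk: "dk \<in> L2 M M" and d': "d' \<in> L2 M M" and v: "v \<in> L2 M (F k)"
    and ed: "AE s in M. dk s = A *v cexp M (F k) d' s + B *v v s + C *v cexp M (F k) (\<lambda>z. w k z *\<^sub>R d' z) s + 0"
  shows "(\<integral>s. xk s \<bullet> dk s \<partial>M) = (\<integral>s. x' s \<bullet> d' s \<partial>M) - (\<integral>s. p s \<bullet> cexp M (F k) d' s \<partial>M)
           + (\<integral>s. (transpose B *v xk s) \<bullet> v s \<partial>M)"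
proof -
  have G: "subalgebra M (F k)" using subalg k by simp
  have S: "sigma_finite_subalgebra M (F k)" using sfs k by simp
  have kN: "k \<le> N" "Suc k \<le> N" using k by auto
  define a1 where "a1 = (\<lambda>s. transpose A *v xk s)"
  define a2 where "a2 = (\<lambda>s. transpose C *v xk s)"
  define wa2 where "wa2 = (\<lambda>s. w k s *\<^sub>R a2 s)"
  define bv where "bv = (\<lambda>s. transpose B *v xk s)"
  define cd where "cd = cexp M (F k) d'"
  define cwd where "cwd = cexp M (F k) (\<lambda>z. w k z *\<^sub>R d' z)"
  have a1F: "a1 \<in> L2 M (F k)" unfolding a1_def by (rule L2_mv[OF G xk])
  have a2F: "a2 \<in> L2 M (F k)" unfolding a2_def by (rule L2_mv[OF G xk])
  have a1M: "a1 \<in> L2 M M" by (rule L2_FM[OF kN(1) a1F])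
  have a2M: "a2 \<in> L2 M M" by (rule L2_FM[OF kN(1) a2F])
  have wa2M: "wa2 \<in> L2 M M" unfolding wa2_def by (rule L2_FM[OF kN(2) wx_L2(1)[OF k a2F]])
  have bvM: "bv \<in> L2 M M" unfolding bv_def by (rule L2_mv[OF subalg_refl L2_FM[OF kN(1) xk]])
  have xkM: "xk \<in> L2 M M" by (rule L2_FM[OF kN(1) xk])
  have pM: "p \<in> L2 M M" by (rule L2_FM[OF kN(1) p])
  have vM: "v \<in> L2 M M" by (rule L2_FM[OF kN(1) v])
  have cdM: "cd \<in> L2 M M" unfolding cd_def by (rule L2_FM[OF kN(1) cexp_L2[OF prob_space_axioms S d']])
  have cwdM: "cwd \<in> L2 M M" unfolding cwd_def by (rule L2_FM[OF kN(1) cexpw_L2[OF k d']])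
  have AcdM: "(\<lambda>s. A *v cd s) \<in> L2 M M" by (rule L2_mv[OF subalg_refl cdM])
  have BvM: "(\<lambda>s. B *v v s) \<in> L2 M M" by (rule L2_mv[OF subalg_refl vM])
  have CcwdM: "(\<lambda>s. C *v cwd s) \<in> L2 M M" by (rule L2_mv[OF subalg_refl cwdM])
  note meas = L2_meas[OF a1M] L2_meas[OF a2M] L2_meas[OF wa2M] L2_meas[OF bvM] L2_meas[OF xkM]
    L2_meas[OF pM] L2_meas[OF vM] L2_meas[OF cdM] L2_meas[OF cwdM] L2_meas[OF dk] L2_meas[OF d'] L2_meas[OF x']
    L2_meas[OF AcdM] L2_meas[OF BvM] L2_meas[OF CcwdM]
  have wd_meas: "(\<lambda>z. w k z *\<^sub>R d' z) \<in> borel_measurable M"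
    using w_meas k by (intro borel_measurable_scaleR L2_meas[OF d']) blast
  have "(\<integral>s. xk s \<bullet> dk s \<partial>M) = (\<integral>s. xk s \<bullet> (A *v cd s + B *v v s + C *v cwd s) \<partial>M)"
  proof (rule int_inner_cong_right)
    show "(\<lambda>s. A *v cd s + B *v v s + C *v cwd s) \<in> borel_measurable M"
      using meas by measurable
    show "AE x in M. dk x = A *v cd x + B *v v x + C *v cwd x"
      using ed unfolding cd_def cwd_def by simp
  qed (use meas in simp_all)
  also have "\<dots> = (\<integral>s. a1 s \<bullet> cd s + bv s \<bullet> v s + a2 s \<bullet> cwd s \<partial>M)"
    unfolding a1_def bv_def a2_def by (simp add: inner_add_right inner_mv)
  also have "\<dots> = (\<integral>s. a1 s \<bullet> cd s \<partial>M) + (\<integral>s. bv s \<bullet> v s \<partial>M) + (\<integral>s. a2 s \<bullet> cwd s \<partial>M)"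
    by (rule int_add3) (rule L2_inner_int; fact)+
  finally have s1: "(\<integral>s. xk s \<bullet> dk s \<partial>M) = (\<integral>s. a1 s \<bullet> cd s \<partial>M) + (\<integral>s. bv s \<bullet> v s \<partial>M) + (\<integral>s. a2 s \<bullet> cwd s \<partial>M)" .
  have s2: "(\<integral>s. a1 s \<bullet> cd s \<partial>M) = (\<integral>s. a1 s \<bullet> d' s \<partial>M)"
    unfolding cd_def by (rule cexp_dual(2)[OF S L2_meas[OF a1F] L2_meas[OF d']]) (rule dual_comp_int[OF a1M d'])
  have s3a: "(\<integral>s. a2 s \<bullet> cwd s \<partial>M) = (\<integral>s. a2 s \<bullet> (w k s *\<^sub>R d' s) \<partial>M)"
  proof (unfold cwd_def, rule cexp_dual(2)[OF S L2_meas[OF a2F] wd_meas])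
    fix i
    have "integrable M (\<lambda>x. wa2 x $ i * d' x $ i)" by (rule dual_comp_int[OF wa2M d'])
    then show "integrable M (\<lambda>x. a2 x $ i * (w k x *\<^sub>R d' x) $ i)"
      unfolding wa2_def by (simp add: mult.commute mult.left_commute)
  qed
  have s3: "(\<integral>s. a2 s \<bullet> cwd s \<partial>M) = (\<integral>s. wa2 s \<bullet> d' s \<partial>M)"
    unfolding s3a wa2_def by simp
  have "(\<integral>s. x' s \<bullet> d' s \<partial>M) = (\<integral>s. (a1 s + p s + wa2 s) \<bullet> d' s \<partial>M)"
  proof (rule int_inner_cong_left)
    show "(\<lambda>s. a1 s + p s + wa2 s) \<in> borel_measurable M" using meas by measurable
    show "AE x in M. x' x = a1 x + p x + wa2 x" using ex unfolding a1_def wa2_def a2_def by simp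
  qed (use meas in simp_all)
  also have "\<dots> = (\<integral>s. a1 s \<bullet> d' s + p s \<bullet> d' s + wa2 s \<bullet> d' s \<partial>M)"
    by (simp add: inner_add_left)
  also have "\<dots> = (\<integral>s. a1 s \<bullet> d' s \<partial>M) + (\<integral>s. p s \<bullet> d' s \<partial>M) + (\<integral>s. wa2 s \<bullet> d' s \<partial>M)"
    by (rule int_add3) (rule L2_inner_int; fact)+
  finally have s4: "(\<integral>s. x' s \<bullet> d' s \<partial>M) = (\<integral>s. a1 s \<bullet> d' s \<partial>M) + (\<integral>s. p s \<bullet> d' s \<partial>M) + (\<integral>s. wa2 s \<bullet> d' s \<partial>M)" .
  have s5: "(\<integral>s. p s \<bullet> cd s \<partial>M) = (\<integral>s. p s \<bullet> d' s \<partial>M)"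
    unfolding cd_def by (rule cexp_dual(2)[OF S L2_meas[OF p] L2_meas[OF d']]) (rule dual_comp_int[OF pM d'])
  show ?thesis
    using s1 s2 s3 s4 s5 unfolding cd_def[symmetric] bv_def by linarith
qed

end

lemma sym_inner: "symm Q \<Longrightarrow> (Q *v b) \<bullet> a = (Q *v a) \<bullet> (b::real^'n)"
  for Q :: "real^'n^'n"
  by (metis inner_commute inner_mv symm_def)

lemma quad_split: "symm G \<Longrightarrow> (G *v (a + b)) \<bullet> (a + b) = (G *v a) \<bullet> a + (G *v b) \<bullet> b + 2 * ((G *v a) \<bullet> (b::real^'n))"
  for G :: "real^'n^'n"
  using sym_inner[of G a b] by (simp add: matrix_vector_right_distrib inner_add_left inner_add_right)

lemma trm_split:
  assumes "symm Q" "symm R"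
  shows "trm Q S R e r (a + b) (uu + vv) = trm Q S R e r a uu + trm Q S R 0 0 b vv
    + 2 * ((Q *v a) \<bullet> b + (S *v a) \<bullet> vv + (S *v b) \<bullet> uu + (R *v uu) \<bullet> vv + e \<bullet> b + r \<bullet> vv)"
  unfolding trm_def quad_split[OF assms(1)] quad_split[OF assms(2)]
  by (simp add: matrix_vector_right_distrib inner_add_left inner_add_right algebra_simps)

lemma lin_id:
  fixes Q :: "real^'n^'n" and S :: "real^'n^'m" and R :: "real^'m^'m" and B :: "real^'m^'n"
  shows "(Q *v a) \<bullet> b + (S *v a) \<bullet> vv + (S *v b) \<bullet> uu + (R *v uu) \<bullet> vv + e \<bullet> b + r \<bullet> vv
    = (Q *v a + transpose S *v uu + e) \<bullet> b + (transpose B *v xx + S *v a + R *v uu + r) \<bullet> vv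
      - (transpose B *v xx) \<bullet> vv"
proof -
  have "(transpose S *v uu) \<bullet> b = (S *v b) \<bullet> uu"
    by (metis inner_commute inner_mv)
  then show ?thesis by (simp add: inner_add_left algebra_simps)
qed


lemma trm_int:
  fixes e a :: "'s \<Rightarrow> real^'n" and r uu :: "'s \<Rightarrow> real^'m"
  assumes e: "e \<in> L2 M M" and r: "r \<in> L2 M M" and a: "a \<in> L2 M M" and uu: "uu \<in> L2 M M"
  shows "integrable M (\<lambda>x. trm Q S R (e x) (r x) (a x) (uu x))"
proof -
  have i1: "integrable M (\<lambda>x. (Q *v a x) \<bullet> a x)" by (rule L2_inner_int[OF L2_mv[OF subalg_refl a] a])
  have i2: "integrable M (\<lambda>x. (S *v a x) \<bullet> uu x)" by (rule L2_inner_int[OF L2_mv[OF subalg_refl a] uu])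
  have i3: "integrable M (\<lambda>x. (R *v uu x) \<bullet> uu x)" by (rule L2_inner_int[OF L2_mv[OF subalg_refl uu] uu])
  have i4: "integrable M (\<lambda>x. e x \<bullet> a x)" by (rule L2_inner_int[OF e a])
  have i5: "integrable M (\<lambda>x. r x \<bullet> uu x)" by (rule L2_inner_int[OF r uu])
  show ?thesis unfolding trm_def
    by (intro Bochner_Integration.integrable_add integrable_mult_right i1 i2 i3 i4 i5)
qed

lemma quad_int: "a \<in> L2 M M \<Longrightarrow> b \<in> L2 M M \<Longrightarrow> integrable M (\<lambda>x. (G *v a x) \<bullet> (b x :: real^'n))"
  for G :: "real^'n^'n"
  by (rule L2_inner_int[OF L2_mv[OF subalg_refl]])

context setting begin

lemma expansion:
  fixes A C Q :: "nat \<Rightarrow> real^'n^'n" and B :: "nat \<Rightarrow> real^'m^'n" and S :: "nat \<Rightarrow> real^'n^'m"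
    and R :: "nat \<Rightarrow> real^'m^'m" and G0 :: "real^'n^'n"
    and q \<eta> :: "nat \<Rightarrow> 'a \<Rightarrow> real^'n" and \<rho> u v :: "nat \<Rightarrow> 'a \<Rightarrow> real^'m"
    and x y d :: "nat \<Rightarrow> 'a \<Rightarrow> real^'n"
  assumes symG: "symm G0" and symQ: "\<forall>k<N. symm (Q k)" and symR: "\<forall>k<N. symm (R k)"
    and e: "\<eta> \<in> L2F M w N" and r: "\<rho> \<in> L2F M w N" and u: "u \<in> L2F M w N" and v: "v \<in> L2F M w N"
    and y: "is_state M w N A B C q \<xi> u y" and d: "is_state M w N A B C (\<lambda>k x. 0) (\<lambda>x. 0) v d"
    and xL: "\<forall>k\<le>N. x k \<in> L2 M (F k)"
    and x0: "AE s in M. x 0 s = G0 *v y 0 s"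
    and xe: "\<forall>k<N. AE s in M. x (Suc k) s = transpose (A k) *v x k s + Q k *v cexp M (F k) (y (Suc k)) s
          + transpose (S k) *v u k s + \<eta> k s + w k s *\<^sub>R (transpose (C k) *v x k s)"
  shows "cost M w N G0 Q S R \<eta> \<rho> (\<lambda>k s. y k s + d k s) (\<lambda>k s. u k s + v k s)
    = cost M w N G0 Q S R \<eta> \<rho> y u
      + (\<Sum>k<N. \<integral>s. (transpose (B k) *v x k s + S k *v cexp M (F k) (y (Suc k)) s + R k *v u k s + \<rho> k s) \<bullet> v k s \<partial>M)
      + cost M w N G0 Q S R (\<lambda>k s. 0) (\<lambda>k s. 0) d v"
proof -
  define yb where "yb k = cexp M (F k) (y (Suc k))" for k
  define db where "db k = cexp M (F k) (d (Suc k))" for k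
  define p where "p k s = Q k *v yb k s + transpose (S k) *v u k s + \<eta> k s" for k s
  define Phi where "Phi k s = transpose (B k) *v x k s + S k *v yb k s + R k *v u k s + \<rho> k s" for k s
  define Bx where "Bx k s = transpose (B k) *v x k s" for k s
  have yM: "y k \<in> L2 M M" if "k \<le> N" for k using state_L2[OF y that] .
  have dM: "d k \<in> L2 M M" if "k \<le> N" for k using state_L2[OF d that] .
  have xM: "x k \<in> L2 M M" if "k \<le> N" for k using L2_FM[OF that] xL that by blast
  have ybF: "yb k \<in> L2 M (F k)" if "k < N" for k
    unfolding yb_def by (rule cexp_L2[OF prob_space_axioms sfs yM]) (use that in simp_all)
  have ybM: "yb k \<in> L2 M M" if "k < N" for k using L2_FM ybF that by (meson less_imp_le_nat)
  have dbM: "db k \<in> L2 M M" if "k < N" for k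
    unfolding db_def using L2_FM[OF _ cexp_L2[OF prob_space_axioms sfs dM]] that by simp
  have uF: "u k \<in> L2 M (F k)" if "k < N" for k using L2F_L2[OF u that] .
  have eF: "\<eta> k \<in> L2 M (F k)" if "k < N" for k using L2F_L2[OF e that] .
  have vF: "v k \<in> L2 M (F k)" if "k < N" for k using L2F_L2[OF v that] .
  have uM: "u k \<in> L2 M M" if "k < N" for k using L2_FM uF that by (meson less_imp_le_nat)
  have eM: "\<eta> k \<in> L2 M M" if "k < N" for k using L2_FM eF that by (meson less_imp_le_nat)
  have vM: "v k \<in> L2 M M" if "k < N" for k using L2_FM vF that by (meson less_imp_le_nat)
  have rM: "\<rho> k \<in> L2 M M" if "k < N" for k using L2_FM L2F_L2[OF r that] that by (meson less_imp_le_nat)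
  have pF: "p k \<in> L2 M (F k)" if "k < N" for k
  proof -
    have G: "subalgebra M (F k)" using subalg that by simp
    show ?thesis unfolding p_def
      by (intro L2_add[OF G] L2_mv[OF G] ybF uF eF that)
  qed
  have pM: "p k \<in> L2 M M" if "k < N" for k using L2_FM pF that by (meson less_imp_le_nat)
  have PhiM: "Phi k \<in> L2 M M" if "k < N" for k
    unfolding Phi_def by (intro L2_add[OF subalg_refl] L2_mv[OF subalg_refl] xM ybM uM rM) (use that in simp_all)
  have BxM: "Bx k \<in> L2 M M" if "k < N" for k
    unfolding Bx_def by (intro L2_mv[OF subalg_refl] xM) (use that in simp)
  have T: "(\<integral>s. x k s \<bullet> d k s \<partial>M) - (\<integral>s. x (Suc k) s \<bullet> d (Suc k) s \<partial>M)
      = (\<integral>s. Bx k s \<bullet> v k s \<partial>M) - (\<integral>s. p k s \<bullet> db k s \<partial>M)" if k: "k < N" for k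
  proof -
    have ex: "AE s in M. x (Suc k) s = transpose (A k) *v x k s + p k s + w k s *\<^sub>R (transpose (C k) *v x k s)"
      using xe k unfolding p_def yb_def by (simp add: add.assoc)
    have ed: "AE s in M. d k s = A k *v cexp M (F k) (d (Suc k)) s + B k *v v k s
        + C k *v cexp M (F k) (\<lambda>z. w k z *\<^sub>R d (Suc k) z) s + 0"
      using d k unfolding is_state_def by blast
    have "(\<integral>s. x k s \<bullet> d k s \<partial>M) = (\<integral>s. x (Suc k) s \<bullet> d (Suc k) s \<partial>M) - (\<integral>s. p k s \<bullet> cexp M (F k) (d (Suc k)) s \<partial>M)
           + (\<integral>s. (transpose (B k) *v x k s) \<bullet> v k s \<partial>M)"
      by (rule tele[OF k _ xM pF ex dM dM vF ed]) (use xL k in simp_all)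
    then show ?thesis unfolding Bx_def db_def by simp
  qed
  have dN: "AE s in M. d N s = 0" using d unfolding is_state_def by blast
  have xdN: "(\<integral>s. x N s \<bullet> d N s \<partial>M) = 0"
  proof -
    have "(\<integral>s. x N s \<bullet> d N s \<partial>M) = (\<integral>s. x N s \<bullet> 0 \<partial>M)"
      by (rule int_inner_cong_right[OF L2_meas[OF xM] L2_meas[OF dM]]) (simp_all add: dN)
    then show ?thesis by simp
  qed
  have G0d: "(\<integral>s. (G0 *v y 0 s) \<bullet> d 0 s \<partial>M) = (\<integral>s. x 0 s \<bullet> d 0 s \<partial>M)"
  proof (rule int_inner_cong_left[OF L2_meas[OF dM[OF le0]] _ L2_meas[OF xM[OF le0]]])
    show "(\<lambda>s. G0 *v y 0 s) \<in> borel_measurable M" using L2_meas[OF L2_mv[OF subalg_refl yM[OF le0]]] .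
    show "AE s in M. G0 *v y 0 s = x 0 s" by (rule AE_mp[OF x0], rule AE_I2, simp)
  qed
  have tel: "(\<integral>s. x 0 s \<bullet> d 0 s \<partial>M) = (\<Sum>k<N. (\<integral>s. Bx k s \<bullet> v k s \<partial>M) - (\<integral>s. p k s \<bullet> db k s \<partial>M))"
  proof -
    have "(\<Sum>k<N. (\<integral>s. x k s \<bullet> d k s \<partial>M) - (\<integral>s. x (Suc k) s \<bullet> d (Suc k) s \<partial>M))
        = (\<integral>s. x 0 s \<bullet> d 0 s \<partial>M) - (\<integral>s. x N s \<bullet> d N s \<partial>M)"
      by (rule sum_lessThan_telescope')
    moreover have "(\<Sum>k<N. (\<integral>s. x k s \<bullet> d k s \<partial>M) - (\<integral>s. x (Suc k) s \<bullet> d (Suc k) s \<partial>M))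
        = (\<Sum>k<N. (\<integral>s. Bx k s \<bullet> v k s \<partial>M) - (\<integral>s. p k s \<bullet> db k s \<partial>M))"
      by (rule sum.cong) (simp_all add: T)
    ultimately show ?thesis using xdN by simp
  qed
  define I1 where "I1 s = (G0 *v y 0 s) \<bullet> y 0 s + (\<Sum>k<N. trm (Q k) (S k) (R k) (\<eta> k s) (\<rho> k s) (yb k s) (u k s))" for s
  define I0 where "I0 s = (G0 *v d 0 s) \<bullet> d 0 s + (\<Sum>k<N. trm (Q k) (S k) (R k) 0 0 (db k s) (v k s))" for s
  define Lin where "Lin s = (G0 *v y 0 s) \<bullet> d 0 s + (\<Sum>k<N. p k s \<bullet> db k s + Phi k s \<bullet> v k s - Bx k s \<bullet> v k s)" for s
  have cadd: "AE s in M. \<forall>k\<in>{..<N}. cexp M (F k) (\<lambda>s. y (Suc k) s + d (Suc k) s) s = yb k s + db k s"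
  proof (rule AE_finite_allI)
    fix k assume "k \<in> {..<N}"
    then have k: "k < N" by simp
    show "AE s in M. cexp M (F k) (\<lambda>s. y (Suc k) s + d (Suc k) s) s = yb k s + db k s"
      unfolding yb_def db_def
      by (rule cexp_add[OF sfs comp_int comp_int]) (use k yM dM in simp_all)
  qed simp
  have pw: "(G0 *v (y 0 s + d 0 s)) \<bullet> (y 0 s + d 0 s) + (\<Sum>k<N. trm (Q k) (S k) (R k) (\<eta> k s) (\<rho> k s)
        (cexp M (F k) (\<lambda>s. y (Suc k) s + d (Suc k) s) s) (u k s + v k s))
      = I1 s + I0 s + 2 * Lin s"
    if h: "\<forall>k\<in>{..<N}. cexp M (F k) (\<lambda>s. y (Suc k) s + d (Suc k) s) s = yb k s + db k s" for s
  proof -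
    have "(\<Sum>k<N. trm (Q k) (S k) (R k) (\<eta> k s) (\<rho> k s)
        (cexp M (F k) (\<lambda>s. y (Suc k) s + d (Suc k) s) s) (u k s + v k s))
      = (\<Sum>k<N. trm (Q k) (S k) (R k) (\<eta> k s) (\<rho> k s) (yb k s) (u k s)
          + trm (Q k) (S k) (R k) 0 0 (db k s) (v k s)
          + 2 * (p k s \<bullet> db k s + Phi k s \<bullet> v k s - Bx k s \<bullet> v k s))"
    proof (rule sum.cong)
      fix k assume "k \<in> {..<N}"
      then have k: "k < N" and hk: "cexp M (F k) (\<lambda>s. y (Suc k) s + d (Suc k) s) s = yb k s + db k s"
        using h by auto
      show "trm (Q k) (S k) (R k) (\<eta> k s) (\<rho> k s) (cexp M (F k) (\<lambda>s. y (Suc k) s + d (Suc k) s) s) (u k s + v k s)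
        = trm (Q k) (S k) (R k) (\<eta> k s) (\<rho> k s) (yb k s) (u k s) + trm (Q k) (S k) (R k) 0 0 (db k s) (v k s)
          + 2 * (p k s \<bullet> db k s + Phi k s \<bullet> v k s - Bx k s \<bullet> v k s)"
        unfolding hk trm_split[OF symQ[rule_format, OF k] symR[rule_format, OF k]] p_def Phi_def Bx_def
        by (subst lin_id[where B="B k" and xx="x k s"]) simp 
    qed simp
    also have "\<dots> = (\<Sum>k<N. trm (Q k) (S k) (R k) (\<eta> k s) (\<rho> k s) (yb k s) (u k s))
        + (\<Sum>k<N. trm (Q k) (S k) (R k) 0 0 (db k s) (v k s))
        + 2 * (\<Sum>k<N. p k s \<bullet> db k s + Phi k s \<bullet> v k s - Bx k s \<bullet> v k s)"
      by (simp add: sum.distrib sum_distrib_left) 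
    finally show ?thesis
      unfolding I1_def I0_def Lin_def quad_split[OF symG] by (simp add: algebra_simps) 
  qed
  have I1i: "integrable M I1"
    unfolding I1_def
    by (intro Bochner_Integration.integrable_add quad_int yM Bochner_Integration.integrable_sum trm_int eM rM ybM uM) auto 
  have I0i: "integrable M I0"
  proof -
    have z: "(\<lambda>s. 0::real^'k) \<in> L2 M M" by (rule L2_zero)
    show ?thesis unfolding I0_def
      by (intro Bochner_Integration.integrable_add quad_int dM Bochner_Integration.integrable_sum
          trm_int[OF z z] dbM vM) auto 
  qed
  have li: "integrable M (\<lambda>s. p k s \<bullet> db k s)" "integrable M (\<lambda>s. Phi k s \<bullet> v k s)"
    "integrable M (\<lambda>s. Bx k s \<bullet> v k s)" if "k < N" for k
    using that by (auto intro!: L2_inner_int pM dbM PhiM vM BxM) 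
  have G0di: "integrable M (\<lambda>s. (G0 *v y 0 s) \<bullet> d 0 s)" by (intro quad_int yM dM) simp_all
  have Lini: "integrable M Lin"
    unfolding Lin_def
    by (intro Bochner_Integration.integrable_add G0di Bochner_Integration.integrable_sum Bochner_Integration.integrable_diff li) auto 
  have intLin: "(\<integral>s. Lin s \<partial>M) = (\<Sum>k<N. \<integral>s. Phi k s \<bullet> v k s \<partial>M)"
  proof -
    have "(\<integral>s. Lin s \<partial>M) = (\<integral>s. (G0 *v y 0 s) \<bullet> d 0 s \<partial>M)
        + (\<integral>s. (\<Sum>k<N. p k s \<bullet> db k s + Phi k s \<bullet> v k s - Bx k s \<bullet> v k s) \<partial>M)"
      unfolding Lin_def
      by (rule Bochner_Integration.integral_add[OF G0di])
         (intro Bochner_Integration.integrable_sum Bochner_Integration.integrable_add Bochner_Integration.integrable_diff li, auto) 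
    also have "(\<integral>s. (\<Sum>k<N. p k s \<bullet> db k s + Phi k s \<bullet> v k s - Bx k s \<bullet> v k s) \<partial>M)
        = (\<Sum>k<N. (\<integral>s. p k s \<bullet> db k s \<partial>M) + (\<integral>s. Phi k s \<bullet> v k s \<partial>M) - (\<integral>s. Bx k s \<bullet> v k s \<partial>M))"
    proof -
      have "(\<integral>s. (\<Sum>k<N. p k s \<bullet> db k s + Phi k s \<bullet> v k s - Bx k s \<bullet> v k s) \<partial>M)
          = (\<Sum>k<N. \<integral>s. p k s \<bullet> db k s + Phi k s \<bullet> v k s - Bx k s \<bullet> v k s \<partial>M)"
        by (rule Bochner_Integration.integral_sum)
           (intro Bochner_Integration.integrable_add Bochner_Integration.integrable_diff li, auto) 
      also have "\<dots> = (\<Sum>k<N. (\<integral>s. p k s \<bullet> db k s \<partial>M) + (\<integral>s. Phi k s \<bullet> v k s \<partial>M) - (\<integral>s. Bx k s \<bullet> v k s \<partial>M))"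
      proof (rule sum.cong)
        fix k assume "k \<in> {..<N}"
        then have k: "k < N" by simp
        show "(\<integral>s. p k s \<bullet> db k s + Phi k s \<bullet> v k s - Bx k s \<bullet> v k s \<partial>M)
          = (\<integral>s. p k s \<bullet> db k s \<partial>M) + (\<integral>s. Phi k s \<bullet> v k s \<partial>M) - (\<integral>s. Bx k s \<bullet> v k s \<partial>M)"
          using li[OF k] by (simp add: Bochner_Integration.integral_add Bochner_Integration.integral_diff) 
      qed simp
      finally show ?thesis .
    qed
    finally show ?thesis
      using G0d tel by (simp add: sum.distrib[symmetric] sum_subtractf[symmetric] algebra_simps) 
  qed
  have mI1: "I1 \<in> borel_measurable M" by (rule borel_measurable_integrable[OF I1i])
  have mI0: "I0 \<in> borel_measurable M" by (rule borel_measurable_integrable[OF I0i])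
  have mL: "Lin \<in> borel_measurable M" by (rule borel_measurable_integrable[OF Lini])
  have mI: "(\<lambda>s. I1 s + I0 s + 2 * Lin s) \<in> borel_measurable M"
    by (intro borel_measurable_add mI1 mI0 borel_measurable_times borel_measurable_const mL) 
  have eqAE: "AE s in M. (G0 *v (y 0 s + d 0 s)) \<bullet> (y 0 s + d 0 s) + (\<Sum>k<N. trm (Q k) (S k) (R k) (\<eta> k s) (\<rho> k s)
        (cexp M (F k) (\<lambda>s. y (Suc k) s + d (Suc k) s) s) (u k s + v k s)) = I1 s + I0 s + 2 * Lin s"
    by (rule AE_mp[OF cadd], rule AE_I2, rule impI, rule pw)
  have m1: "(\<lambda>s. (G0 *v (y 0 s + d 0 s)) \<bullet> (y 0 s + d 0 s) + (\<Sum>k<N. trm (Q k) (S k) (R k) (\<eta> k s) (\<rho> k s)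
        (cexp M (F k) (\<lambda>s. y (Suc k) s + d (Suc k) s) s) (u k s + v k s))) \<in> borel_measurable M"
  proof (rule integrand_meas[where y="\<lambda>k s. y k s + d k s" and u="\<lambda>k s. u k s + v k s" and \<eta>=\<eta> and \<rho>=\<rho>])
    show "(\<lambda>s. y 0 s + d 0 s) \<in> borel_measurable M"
      by (rule borel_measurable_add[OF L2_meas[OF yM[OF le0]] L2_meas[OF dM[OF le0]]])
    fix k assume k: "k < N"
    show "(\<lambda>s. u k s + v k s) \<in> borel_measurable M"
      by (rule borel_measurable_add[OF L2_meas[OF uM[OF k]] L2_meas[OF vM[OF k]]])
    show "\<eta> k \<in> borel_measurable M" by (rule L2_meas[OF eM[OF k]])
    show "\<rho> k \<in> borel_measurable M" by (rule L2_meas[OF rM[OF k]])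
  qed
  have "(\<integral>s. (G0 *v (y 0 s + d 0 s)) \<bullet> (y 0 s + d 0 s) + (\<Sum>k<N. trm (Q k) (S k) (R k) (\<eta> k s) (\<rho> k s)
        (cexp M (F k) (\<lambda>s. y (Suc k) s + d (Suc k) s) s) (u k s + v k s)) \<partial>M)
      = (\<integral>s. I1 s + I0 s + 2 * Lin s \<partial>M)"
    by (rule integral_cong_AE[OF m1 mI eqAE])
  also have "\<dots> = (\<integral>s. I1 s \<partial>M) + (\<integral>s. I0 s \<partial>M) + 2 * (\<integral>s. Lin s \<partial>M)"
  proof -
    have "(\<integral>s. I1 s + I0 s + 2 * Lin s \<partial>M) = (\<integral>s. I1 s + I0 s \<partial>M) + (\<integral>s. 2 * Lin s \<partial>M)"
      by (rule Bochner_Integration.integral_add[OF Bochner_Integration.integrable_add[OF I1i I0i]])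
         (rule integrable_mult_right, rule Lini)
    also have "\<dots> = (\<integral>s. I1 s \<partial>M) + (\<integral>s. I0 s \<partial>M) + 2 * (\<integral>s. Lin s \<partial>M)"
      unfolding Bochner_Integration.integral_add[OF I1i I0i] integral_mult_right_zero ..
    finally show ?thesis .
  qed
  finally have main: "(\<integral>s. (G0 *v (y 0 s + d 0 s)) \<bullet> (y 0 s + d 0 s) + (\<Sum>k<N. trm (Q k) (S k) (R k) (\<eta> k s) (\<rho> k s)
        (cexp M (F k) (\<lambda>s. y (Suc k) s + d (Suc k) s) s) (u k s + v k s)) \<partial>M)
      = (\<integral>s. I1 s \<partial>M) + (\<integral>s. I0 s \<partial>M) + 2 * (\<integral>s. Lin s \<partial>M)" .
  have c1: "cost M w N G0 Q S R \<eta> \<rho> y u = 1/2 * (\<integral>s. I1 s \<partial>M)"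
    unfolding cost_trm I1_def yb_def ..
  have c0: "cost M w N G0 Q S R (\<lambda>k s. 0) (\<lambda>k s. 0) d v = 1/2 * (\<integral>s. I0 s \<partial>M)"
    unfolding cost_trm I0_def db_def ..
  have cyd: "cost M w N G0 Q S R \<eta> \<rho> (\<lambda>k s. y k s + d k s) (\<lambda>k s. u k s + v k s)
      = 1/2 * (\<integral>s. (G0 *v (y 0 s + d 0 s)) \<bullet> (y 0 s + d 0 s) + (\<Sum>k<N. trm (Q k) (S k) (R k) (\<eta> k s) (\<rho> k s)
        (cexp M (F k) (\<lambda>s. y (Suc k) s + d (Suc k) s) s) (u k s + v k s)) \<partial>M)"
    unfolding cost_trm ..
  show ?thesis
    using cyd main c1 c0 intLin unfolding Phi_def yb_def by linarith
qed

end

lemma inv_R: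
  fixes R :: "real^'m^'m"
  assumes d: "\<delta> > 0" and pd: "\<forall>v. \<delta> * (norm v)\<^sup>2 \<le> v \<bullet> (R *v v)"
  shows "R ** matrix_inv R = mat 1"
proof -
  have "\<forall>x. R *v x = 0 \<longrightarrow> x = 0"
  proof (intro allI impI)
    fix x assume "R *v x = 0"
    then have "\<delta> * (norm x)\<^sup>2 \<le> 0" using pd[rule_format, of x] by simp
    then have "(norm x)\<^sup>2 \<le> 0" using d by (simp add: mult_le_0_iff)
    then show "x = 0" by simp
  qed
  then have "\<exists>B. B ** R = mat 1" by (simp add: matrix_left_invertible_ker)
  then have "invertible R" by (simp add: invertible_left_inverse)
  then have "\<exists>A'. R ** A' = mat 1 \<and> A' ** R = mat 1" by (simp add: invertible_def)
  then have "R ** matrix_inv R = mat 1 \<and> matrix_inv R ** R = mat 1"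
    unfolding matrix_inv_def by (rule someI_ex)
  then show ?thesis by simp
qed

lemma trm0_nonneg:
  fixes Q :: "real^'n^'n" and S :: "real^'n^'m" and R :: "real^'m^'m"
  assumes sR: "symm R" and Ri: "R ** matrix_inv R = mat 1"
    and psdQ: "psd (Q - transpose S ** matrix_inv R ** S)" and psdR: "\<forall>v. 0 \<le> v \<bullet> (R *v v)"
  shows "0 \<le> trm Q S R 0 0 b vv"
proof -
  define c where "c = matrix_inv R *v (S *v b)"
  define z where "z = vv + c"
  have Rc: "R *v c = S *v b" unfolding c_def matrix_vector_mul_assoc matrix_mul_assoc Ri by simp
  have z1: "(R *v z) \<bullet> z = (R *v vv) \<bullet> vv + 2 * ((S *v b) \<bullet> vv) + (S *v b) \<bullet> c"
  proof -
    have "(R *v vv) \<bullet> c = (R *v c) \<bullet> vv" by (rule sym_inner[OF sR])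
    then show ?thesis unfolding z_def
      by (simp add: matrix_vector_right_distrib inner_add_left inner_add_right Rc inner_commute)
  qed
  have p1: "b \<bullet> ((Q - transpose S ** matrix_inv R ** S) *v b) = (Q *v b) \<bullet> b - (S *v b) \<bullet> c"
  proof -
    have "b \<bullet> ((transpose S ** matrix_inv R ** S) *v b) = b \<bullet> (transpose S *v c)"
      unfolding c_def by (simp add: matrix_vector_mul_assoc[symmetric])
    also have "\<dots> = (S *v b) \<bullet> c" unfolding inner_mv transpose_transpose ..
    finally show ?thesis
      by (simp add: matrix_vector_mult_diff_rdistrib inner_diff_right inner_commute)
  qed
  have "0 \<le> b \<bullet> ((Q - transpose S ** matrix_inv R ** S) *v b)" using psdQ unfolding psd_def by blast
  moreover have "0 \<le> z \<bullet> (R *v z)" using psdR by blast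
  ultimately show ?thesis unfolding trm_def p1 using z1 by (simp add: inner_commute)
qed


lemma cost0_nonneg:
  fixes Q :: "nat \<Rightarrow> real^'n^'n" and S :: "nat \<Rightarrow> real^'n^'m" and R :: "nat \<Rightarrow> real^'m^'m"
    and d :: "nat \<Rightarrow> 'a \<Rightarrow> real^'n" and v :: "nat \<Rightarrow> 'a \<Rightarrow> real^'m"
  assumes G: "psd G0" and sR: "\<forall>k<N. symm (R k)"
    and pd: "\<exists>\<delta>>0. \<forall>k<N. \<forall>v. \<delta> * (norm v)\<^sup>2 \<le> v \<bullet> (R k *v v)"
    and pQ: "\<forall>k<N. psd (Q k - transpose (S k) ** matrix_inv (R k) ** S k)"
  shows "0 \<le> cost M w N G0 Q S R (\<lambda>k s. 0) (\<lambda>k s. 0) d v"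
proof -
  obtain \<delta> where d0: "\<delta> > 0" and pdd: "\<forall>k<N. \<forall>v. \<delta> * (norm v)\<^sup>2 \<le> v \<bullet> (R k *v v)" using pd by blast
  have pw: "0 \<le> (G0 *v d 0 s) \<bullet> d 0 s + (\<Sum>k<N. trm (Q k) (S k) (R k) 0 0 (cexp M (filt M w k) (d (Suc k)) s) (v k s))" for s
  proof (rule add_nonneg_nonneg)
    show "0 \<le> (G0 *v d 0 s) \<bullet> d 0 s" using G unfolding psd_def by (metis inner_commute)
    show "0 \<le> (\<Sum>k<N. trm (Q k) (S k) (R k) 0 0 (cexp M (filt M w k) (d (Suc k)) s) (v k s))"
    proof (rule sum_nonneg)
      fix k assume "k \<in> {..<N}"
      then have k: "k < N" by simp
      have pdk: "\<forall>v. \<delta> * (norm v)\<^sup>2 \<le> v \<bullet> (R k *v v)" using pdd k by blast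
      have psR: "\<forall>v. 0 \<le> v \<bullet> (R k *v v)"
      proof
        fix v :: "real^'m"
        have "0 \<le> \<delta> * (norm v)\<^sup>2" using d0 by simp
        then show "0 \<le> v \<bullet> (R k *v v)" using pdk by (meson order_trans)
      qed
      show "0 \<le> trm (Q k) (S k) (R k) 0 0 (cexp M (filt M w k) (d (Suc k)) s) (v k s)"
        by (rule trm0_nonneg[OF _ inv_R[OF d0 pdk]]) (use sR pQ k psR in auto)
    qed
  qed
  show ?thesis unfolding cost_trm
    by (intro mult_nonneg_nonneg integral_nonneg_AE AE_I2 pw) simp
qed

context setting begin

lemma cost0_scale:
  fixes Q :: "nat \<Rightarrow> real^'n^'n" and S :: "nat \<Rightarrow> real^'n^'m" and R :: "nat \<Rightarrow> real^'m^'m"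
    and A C :: "nat \<Rightarrow> real^'n^'n" and B :: "nat \<Rightarrow> real^'m^'n"
    and d :: "nat \<Rightarrow> 'a \<Rightarrow> real^'n" and v :: "nat \<Rightarrow> 'a \<Rightarrow> real^'m"
  assumes d: "is_state M w N A B C (\<lambda>k x. 0) (\<lambda>x. 0) v d" and v: "v \<in> L2F M w N"
  shows "cost M w N G0 Q S R (\<lambda>k s. 0) (\<lambda>k s. 0) (\<lambda>k s. t *\<^sub>R d k s) (\<lambda>k s. t *\<^sub>R v k s)
    = t\<^sup>2 * cost M w N G0 Q S R (\<lambda>k s. 0) (\<lambda>k s. 0) d v"
proof -
  have dM: "d k \<in> L2 M M" if "k \<le> N" for k using state_L2[OF d that] .
  have vm: "v k \<in> borel_measurable M" if "k < N" for k using L2F_measM[OF v that] .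
  define I0 where "I0 s = (G0 *v d 0 s) \<bullet> d 0 s + (\<Sum>k<N. trm (Q k) (S k) (R k) 0 0 (cexp M (F k) (d (Suc k)) s) (v k s))" for s
  have mI0: "I0 \<in> borel_measurable M" unfolding I0_def
    by (rule integrand_meas[where y=d and u=v and \<eta>="\<lambda>k s. 0" and \<rho>="\<lambda>k s. 0", simplified])
       (use L2_meas[OF dM[OF le0]] vm in auto)
  have m1: "(\<lambda>s. (G0 *v (t *\<^sub>R d 0 s)) \<bullet> (t *\<^sub>R d 0 s) + (\<Sum>k<N. trm (Q k) (S k) (R k) 0 0
      (cexp M (F k) (\<lambda>s. t *\<^sub>R d (Suc k) s) s) (t *\<^sub>R v k s))) \<in> borel_measurable M"
  proof (rule integrand_meas[where y="\<lambda>k s. t *\<^sub>R d k s" and u="\<lambda>k s. t *\<^sub>R v k s" and \<eta>="\<lambda>k s. 0" and \<rho>="\<lambda>k s. 0"])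
    show "(\<lambda>s. t *\<^sub>R d 0 s) \<in> borel_measurable M"
      by (rule borel_measurable_scaleR[OF borel_measurable_const L2_meas[OF dM[OF le0]]])
    fix k assume k: "k < N"
    show "(\<lambda>s. t *\<^sub>R v k s) \<in> borel_measurable M"
      by (rule borel_measurable_scaleR[OF borel_measurable_const vm[OF k]])
  qed (rule borel_measurable_const)+
  have cs: "AE s in M. \<forall>k\<in>{..<N}. cexp M (F k) (\<lambda>s. t *\<^sub>R d (Suc k) s) s = t *\<^sub>R cexp M (F k) (d (Suc k)) s"
  proof (rule AE_finite_allI)
    fix k assume "k \<in> {..<N}"
    then have k: "k < N" by simp
    show "AE s in M. cexp M (F k) (\<lambda>s. t *\<^sub>R d (Suc k) s) s = t *\<^sub>R cexp M (F k) (d (Suc k)) s"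
      by (rule cexp_scale[OF sfs comp_int]) (use k dM in simp_all)
  qed simp
  have tq: "(G *v (t *\<^sub>R a)) \<bullet> (t *\<^sub>R a) = t\<^sup>2 * ((G *v a) \<bullet> a)" for G :: "real^'n^'n" and a
    by (simp add: matrix_vector_mult_scaleR power2_eq_square)
  have tt: "trm Q' S' R' 0 0 (t *\<^sub>R a) (t *\<^sub>R b) = t\<^sup>2 * trm Q' S' R' 0 0 a b" for Q' S' R' a b
    unfolding trm_def by (simp add: matrix_vector_mult_scaleR power2_eq_square algebra_simps)
  have pw: "AE s in M. (G0 *v (t *\<^sub>R d 0 s)) \<bullet> (t *\<^sub>R d 0 s) + (\<Sum>k<N. trm (Q k) (S k) (R k) 0 0
      (cexp M (F k) (\<lambda>s. t *\<^sub>R d (Suc k) s) s) (t *\<^sub>R v k s)) = t\<^sup>2 * I0 s"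
  proof (rule AE_mp[OF cs], rule AE_I2, rule impI)
    fix s assume h: "\<forall>k\<in>{..<N}. cexp M (F k) (\<lambda>s. t *\<^sub>R d (Suc k) s) s = t *\<^sub>R cexp M (F k) (d (Suc k)) s"
    have "(\<Sum>k<N. trm (Q k) (S k) (R k) 0 0 (cexp M (F k) (\<lambda>s. t *\<^sub>R d (Suc k) s) s) (t *\<^sub>R v k s))
        = (\<Sum>k<N. t\<^sup>2 * trm (Q k) (S k) (R k) 0 0 (cexp M (F k) (d (Suc k)) s) (v k s))"
      by (rule sum.cong) (simp_all add: h tt)
    then show "(G0 *v (t *\<^sub>R d 0 s)) \<bullet> (t *\<^sub>R d 0 s) + (\<Sum>k<N. trm (Q k) (S k) (R k) 0 0
      (cexp M (F k) (\<lambda>s. t *\<^sub>R d (Suc k) s) s) (t *\<^sub>R v k s)) = t\<^sup>2 * I0 s"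
      unfolding I0_def tq by (simp add: sum_distrib_left[symmetric] distrib_left)
  qed
  have "(\<integral>s. (G0 *v (t *\<^sub>R d 0 s)) \<bullet> (t *\<^sub>R d 0 s) + (\<Sum>k<N. trm (Q k) (S k) (R k) 0 0
      (cexp M (F k) (\<lambda>s. t *\<^sub>R d (Suc k) s) s) (t *\<^sub>R v k s)) \<partial>M) = (\<integral>s. t\<^sup>2 * I0 s \<partial>M)"
    by (rule integral_cong_AE[OF m1 borel_measurable_times[OF borel_measurable_const mI0] pw])
  then show ?thesis unfolding cost_trm I0_def by simp
qed

lemma state_adapted:
  fixes A C :: "nat \<Rightarrow> real^'n^'n" and B :: "nat \<Rightarrow> real^'m^'n"
  assumes y: "is_state M w N A B C q \<xi> u y" and q: "q \<in> L2F M w N" and u: "u \<in> L2F M w N" and k: "k < N"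
  shows "y k \<in> L2 M (F k)"
proof -
  have r: "(\<lambda>x. A k *v cexp M (F k) (y (Suc k)) x + B k *v u k x + C k *v cexp M (F k) (\<lambda>z. w k z *\<^sub>R y (Suc k) z) x + q k x) \<in> L2 M (F k)"
    by (rule rhs_L2[OF k state_L2[OF y] L2F_L2[OF u k] L2F_L2[OF q k]]) (use k in simp)
  have e: "AE x in M. y k x = A k *v cexp M (F k) (y (Suc k)) x + B k *v u k x + C k *v cexp M (F k) (\<lambda>z. w k z *\<^sub>R y (Suc k) z) x + q k x"
    using y k unfolding is_state_def by blast
  have "y k \<in> borel_measurable (F k)" by (rule complete_F[OF L2_meas[OF r] e])
  then show ?thesis using L2_int[OF state_L2[OF y]] k unfolding L2_def by simp
qed

lemma fwd_step:
  fixes A C Q :: "real^'n^'n" and S :: "real^'n^'m"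
  assumes k: "k < N" and xk: "xk \<in> L2 M (F k)" and y1: "y1 \<in> L2 M M" and u: "uk \<in> L2 M (F k)" and e: "ek \<in> L2 M (F k)"
  shows "(\<lambda>s. transpose A *v xk s + Q *v cexp M (F k) y1 s + transpose S *v uk s + ek s + w k s *\<^sub>R (transpose C *v xk s)) \<in> L2 M (F (Suc k))"
proof -
  have G: "subalgebra M (F (Suc k))" using subalg k by simp
  have sub: "subalgebra (F (Suc k)) (F k)" by (rule subalgF) simp
  have S: "sigma_finite_subalgebra M (F k)" using sfs k by simp
  have Gk: "subalgebra M (F k)" using subalg k by simp
  have t1: "(\<lambda>s. transpose A *v xk s) \<in> L2 M (F (Suc k))" by (rule L2_mono[OF sub L2_mv[OF Gk xk]])
  have t2: "(\<lambda>s. Q *v cexp M (F k) y1 s) \<in> L2 M (F (Suc k))"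
    by (rule L2_mono[OF sub L2_mv[OF Gk cexp_L2[OF prob_space_axioms S y1]]])
  have t3: "(\<lambda>s. transpose S *v uk s) \<in> L2 M (F (Suc k))" by (rule L2_mono[OF sub L2_mv[OF Gk u]])
  have t4: "ek \<in> L2 M (F (Suc k))" by (rule L2_mono[OF sub e])
  have t5: "(\<lambda>s. w k s *\<^sub>R (transpose C *v xk s)) \<in> L2 M (F (Suc k))"
    by (rule wx_L2(1)[OF k L2_mv[OF Gk xk]])
  show ?thesis by (intro L2_add[OF G] t1 t2 t3 t4 t5)
qed

end

primrec Xr :: "'a measure \<Rightarrow> (nat \<Rightarrow> 'a \<Rightarrow> real) \<Rightarrow> real^'n^'n \<Rightarrow> (nat \<Rightarrow> real^'n^'n) \<Rightarrow> (nat \<Rightarrow> real^'n^'n)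
   \<Rightarrow> (nat \<Rightarrow> real^'n^'n) \<Rightarrow> (nat \<Rightarrow> real^'n^'m) \<Rightarrow> (nat \<Rightarrow> 'a \<Rightarrow> real^'n) \<Rightarrow> (nat \<Rightarrow> 'a \<Rightarrow> real^'n)
   \<Rightarrow> (nat \<Rightarrow> 'a \<Rightarrow> real^'m) \<Rightarrow> nat \<Rightarrow> 'a \<Rightarrow> real^'n" where
  "Xr M w G0 A C Q S \<eta> y u 0 = (\<lambda>s. G0 *v y 0 s)"
| "Xr M w G0 A C Q S \<eta> y u (Suc k) = (\<lambda>s. transpose (A k) *v Xr M w G0 A C Q S \<eta> y u k s
     + Q k *v cexp M (filt M w k) (y (Suc k)) s + transpose (S k) *v u k s + \<eta> k s
     + w k s *\<^sub>R (transpose (C k) *v Xr M w G0 A C Q S \<eta> y u k s))"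

context setting begin

lemma Xr_L2:
  fixes A C :: "nat \<Rightarrow> real^'n^'n" and B :: "nat \<Rightarrow> real^'m^'n"
  assumes y: "is_state M w N A B C q \<xi> u y" and q: "q \<in> L2F M w N" and u: "u \<in> L2F M w N"
    and e: "\<eta> \<in> L2F M w N" and N1: "N \<ge> 1"
  shows "k \<le> N \<Longrightarrow> Xr M w G0 A C Q S \<eta> y u k \<in> L2 M (F k)"
proof (induction k)
  case 0
  have G: "subalgebra M (F 0)" using subalg by simp
  have "y 0 \<in> L2 M (F 0)" by (rule state_adapted[OF y q u]) (use N1 in simp)
  then show ?case by (simp add: L2_mv[OF G])
next
  case (Suc k)
  then have k: "k < N" by simp
  show ?case unfolding Xr.simps
    by (rule fwd_step[OF k Suc.IH state_L2[OF y] L2F_L2[OF u k] L2F_L2[OF e k]]) (use k in simp_all)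
qed

end

lemma quad_zero:
  fixes L c :: real
  assumes h: "\<And>t. 0 \<le> t * L + t\<^sup>2 * c"
  shows "L = 0"
proof (rule ccontr)
  assume L: "L \<noteq> 0"
  define b where "b = \<bar>c\<bar> + 1"
  have b: "b > 0" unfolding b_def by simp
  define t where "t = - L / (2 * b)"
  have st: "2 * b * t = - L" unfolding t_def using b by simp
  have "0 \<le> (4 * b\<^sup>2) * (t * L + t\<^sup>2 * c)" using h[of t] by simp
  also have "(4 * b\<^sup>2) * (t * L + t\<^sup>2 * c) = (2 * b) * (2 * b * t) * L + (2 * b * t)\<^sup>2 * c"
    by (simp add: power2_eq_square algebra_simps)
  also have "\<dots> = L\<^sup>2 * (c - 2 * b)" unfolding st by (simp add: power2_eq_square algebra_simps)
  finally have "0 \<le> L\<^sup>2 * (c - 2 * b)" .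
  moreover have "L\<^sup>2 * (c - 2 * b) < 0"
    by (rule mult_pos_neg) (use L b_def in auto)
  ultimately show False by simp
qed

context setting begin

lemma L2F_add: "a \<in> L2F M w N \<Longrightarrow> b \<in> L2F M w N \<Longrightarrow> (\<lambda>k s. a k s + b k s) \<in> L2F M w N"
  unfolding L2F_def by (auto intro!: L2_add[OF subalg])

lemma L2F_scale: "a \<in> L2F M w N \<Longrightarrow> (\<lambda>k s. t *\<^sub>R a k s) \<in> L2F M w N"
  unfolding L2F_def by (auto intro!: L2_scale[OF subalg])

lemma L2F_diff: "a \<in> L2F M w N \<Longrightarrow> b \<in> L2F M w N \<Longrightarrow> (\<lambda>k s. a k s - b k s) \<in> L2F M w N"
  unfolding L2F_def by (auto intro!: L2_diff[OF subalg])

lemma L2F_zero: "(\<lambda>k s. 0) \<in> L2F M w N"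
  unfolding L2F_def by (simp add: L2_zero)

end

context setting begin

lemma necessity:
  fixes A C :: "nat \<Rightarrow> real^'n^'n" and B :: "nat \<Rightarrow> real^'m^'n"
    and q \<eta> :: "nat \<Rightarrow> 'a \<Rightarrow> real^'n" and \<rho> :: "nat \<Rightarrow> 'a \<Rightarrow> real^'m"
    and G0 :: "real^'n^'n" and Q :: "nat \<Rightarrow> real^'n^'n"
    and S :: "nat \<Rightarrow> real^'n^'m" and R :: "nat \<Rightarrow> real^'m^'m"
    and \<xi> :: "'a \<Rightarrow> real^'n" and ustar :: "nat \<Rightarrow> 'a \<Rightarrow> real^'m"
  assumes N1: "N \<ge> 1" and A1: "q \<in> L2F M w N"
    and symG: "symm G0" and symQ: "\<forall>k<N. symm (Q k)" and symR: "\<forall>k<N. symm (R k)"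
    and e: "\<eta> \<in> L2F M w N" and r: "\<rho> \<in> L2F M w N"
    and xi: "\<xi> \<in> L2 M (filt M w N)" and ustar: "ustar \<in> L2F M w N"
    and opt: "\<forall>u \<in> L2F M w N. J M w N A B C q G0 Q S R \<eta> \<rho> \<xi> ustar \<le> J M w N A B C q G0 Q S R \<eta> \<rho> \<xi> u"
  shows "\<exists>x y :: nat \<Rightarrow> 'a \<Rightarrow> real^'n.
       (\<forall>k\<le>N. x k \<in> L2 M M \<and> y k \<in> L2 M M) \<and>
       (\<forall>k<N. AE s in M. x (Suc k) s =
          transpose (A k) *v x k s + Q k *v cexp M (filt M w k) (y (Suc k)) s
          + transpose (S k) *v ustar k s + \<eta> k s + w k s *\<^sub>R (transpose (C k) *v x k s)) \<and>
       (\<forall>k<N. AE s in M. y k s =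
          A k *v cexp M (filt M w k) (y (Suc k)) s + B k *v ustar k s
          + C k *v cexp M (filt M w k) (\<lambda>z. w k z *\<^sub>R y (Suc k) z) s + q k s) \<and>
       (AE s in M. x 0 s = G0 *v y 0 s) \<and>
       (AE s in M. y N s = \<xi> s) \<and>
       (\<forall>k<N. AE s in M. transpose (B k) *v x k s + S k *v cexp M (filt M w k) (y (Suc k)) s
          + R k *v ustar k s + \<rho> k s = 0)"
proof -
  define y where "y = (\<lambda>k. Yr M w N A B C q \<xi> ustar (N - k))"
  have ys: "is_state M w N A B C q \<xi> ustar y" unfolding y_def by (rule state_exists[OF A1 xi ustar])
  define x where "x = Xr M w G0 A C Q S \<eta> y ustar"
  have xL: "\<forall>k\<le>N. x k \<in> L2 M (F k)" unfolding x_def using Xr_L2[OF ys A1 ustar e N1] by blast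
  have x0: "AE s in M. x 0 s = G0 *v y 0 s" unfolding x_def by simp
  have xe: "\<forall>k<N. AE s in M. x (Suc k) s = transpose (A k) *v x k s + Q k *v cexp M (F k) (y (Suc k)) s
          + transpose (S k) *v ustar k s + \<eta> k s + w k s *\<^sub>R (transpose (C k) *v x k s)"
    unfolding x_def by simp
  define Phi where "Phi k s = transpose (B k) *v x k s + S k *v cexp M (F k) (y (Suc k)) s + R k *v ustar k s + \<rho> k s" for k s
  have Lz: "(\<Sum>k<N. \<integral>s. Phi k s \<bullet> v k s \<partial>M) = 0" if v: "v \<in> L2F M w N" for v :: "nat \<Rightarrow> 'a \<Rightarrow> real^'m"
  proof -
    define d where "d = (\<lambda>k. Yr M w N A B C (\<lambda>k x. 0) (\<lambda>x. 0) v (N - k))"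
    have ds: "is_state M w N A B C (\<lambda>k x. 0) (\<lambda>x. 0) v d"
      unfolding d_def by (rule state_exists[OF L2F_zero L2_zero v])
    define L where "L = (\<Sum>k<N. \<integral>s. Phi k s \<bullet> v k s \<partial>M)"
    define c where "c = cost M w N G0 Q S R (\<lambda>k s. 0) (\<lambda>k s. 0) d v"
    have "0 \<le> t * L + t\<^sup>2 * c" for t
    proof -
      have st: "is_state M w N A B C q \<xi> (\<lambda>k s. ustar k s + t *\<^sub>R v k s) (\<lambda>k s. y k s + t *\<^sub>R d k s)"
        by (rule state_add[OF ys state_scale[OF ds]])
      have ut: "(\<lambda>k s. ustar k s + t *\<^sub>R v k s) \<in> L2F M w N" by (intro L2F_add ustar L2F_scale v)
      have j0: "J M w N A B C q G0 Q S R \<eta> \<rho> \<xi> ustar = cost M w N G0 Q S R \<eta> \<rho> y ustar"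
        by (rule J_eq[OF ys ustar e r])
      have "J M w N A B C q G0 Q S R \<eta> \<rho> \<xi> ustar \<le> J M w N A B C q G0 Q S R \<eta> \<rho> \<xi> (\<lambda>k s. ustar k s + t *\<^sub>R v k s)"
        using opt ut by blast
      also have "\<dots> = cost M w N G0 Q S R \<eta> \<rho> (\<lambda>k s. y k s + t *\<^sub>R d k s) (\<lambda>k s. ustar k s + t *\<^sub>R v k s)"
        by (rule J_eq[OF st ut e r])
      also have "\<dots> = cost M w N G0 Q S R \<eta> \<rho> y ustar + (\<Sum>k<N. \<integral>s. Phi k s \<bullet> (t *\<^sub>R v k s) \<partial>M)
          + cost M w N G0 Q S R (\<lambda>k s. 0) (\<lambda>k s. 0) (\<lambda>k s. t *\<^sub>R d k s) (\<lambda>k s. t *\<^sub>R v k s)"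
        unfolding Phi_def
        by (rule expansion[OF symG symQ symR e r ustar L2F_scale[OF v] ys state_scale[OF ds] xL x0 xe])
      also have "(\<Sum>k<N. \<integral>s. Phi k s \<bullet> (t *\<^sub>R v k s) \<partial>M) = t * L"
        unfolding L_def by (simp add: sum_distrib_left)
      also have "cost M w N G0 Q S R (\<lambda>k s. 0) (\<lambda>k s. 0) (\<lambda>k s. t *\<^sub>R d k s) (\<lambda>k s. t *\<^sub>R v k s) = t\<^sup>2 * c"
        unfolding c_def by (rule cost0_scale[OF ds v])
      finally show ?thesis unfolding j0 by simp
    qed
    then show ?thesis unfolding L_def[symmetric] by (rule quad_zero)
  qed
  have PhiF: "Phi k \<in> L2 M (F k)" if k: "k < N" for k
  proof -
    have G: "subalgebra M (F k)" using subalg k by simp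
    show ?thesis unfolding Phi_def
      by (intro L2_add[OF G] L2_mv[OF G] cexp_L2[OF prob_space_axioms sfs state_L2[OF ys]] L2F_L2[OF ustar k] L2F_L2[OF r k])
         (use xL k in simp_all)
  qed
  have PhiM: "Phi k \<in> L2 M M" if k: "k < N" for k using L2_FM[OF _ PhiF[OF k]] k by simp
  have "Phi \<in> L2F M w N" unfolding L2F_def using PhiF by blast
  from Lz[OF this] have s0: "(\<Sum>k<N. \<integral>s. Phi k s \<bullet> Phi k s \<partial>M) = 0" .
  have nn: "\<forall>k\<in>{..<N}. 0 \<le> (\<integral>s. Phi k s \<bullet> Phi k s \<partial>M)"
    by (intro ballI integral_nonneg_AE AE_I2) simp
  have stat: "AE s in M. Phi k s = 0" if k: "k < N" for k
  proof -
    have all0: "\<forall>i\<in>{..<N}. (\<integral>s. Phi i s \<bullet> Phi i s \<partial>M) = 0"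
      by (rule sum_nonneg_eq_0_iff[THEN iffD1, OF finite_lessThan _ s0]) (use nn in blast)
    have "(\<integral>s. Phi k s \<bullet> Phi k s \<partial>M) = 0" using all0 k by simp
    then have "AE s in M. Phi k s \<bullet> Phi k s = 0"
      using integral_nonneg_eq_0_iff_AE[OF L2_inner_int[OF PhiM[OF k] PhiM[OF k]]] by simp
    then show ?thesis by (rule AE_mp) (rule AE_I2, simp)
  qed
  show ?thesis
  proof (intro exI conjI)
    show "\<forall>k\<le>N. x k \<in> L2 M M \<and> y k \<in> L2 M M" using xL L2_FM state_L2[OF ys] by blast
    show "\<forall>k<N. AE s in M. x (Suc k) s = transpose (A k) *v x k s + Q k *v cexp M (F k) (y (Suc k)) s
          + transpose (S k) *v ustar k s + \<eta> k s + w k s *\<^sub>R (transpose (C k) *v x k s)" by (rule xe)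
    show "\<forall>k<N. AE s in M. y k s =
          A k *v cexp M (F k) (y (Suc k)) s + B k *v ustar k s
          + C k *v cexp M (F k) (\<lambda>z. w k z *\<^sub>R y (Suc k) z) s + q k s"
      using ys unfolding is_state_def by blast
    show "AE s in M. x 0 s = G0 *v y 0 s" by (rule x0)
    show "AE s in M. y N s = \<xi> s" using ys unfolding is_state_def by blast
    show "\<forall>k<N. AE s in M. transpose (B k) *v x k s + S k *v cexp M (F k) (y (Suc k)) s
          + R k *v ustar k s + \<rho> k s = 0" using stat unfolding Phi_def by blast
  qed
qed

lemma sufficiency:
  fixes A C :: "nat \<Rightarrow> real^'n^'n" and B :: "nat \<Rightarrow> real^'m^'n"
    and q \<eta> :: "nat \<Rightarrow> 'a \<Rightarrow> real^'n" and \<rho> :: "nat \<Rightarrow> 'a \<Rightarrow> real^'m"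
    and G0 :: "real^'n^'n" and Q :: "nat \<Rightarrow> real^'n^'n"
    and S :: "nat \<Rightarrow> real^'n^'m" and R :: "nat \<Rightarrow> real^'m^'m"
    and \<xi> :: "'a \<Rightarrow> real^'n" and ustar :: "nat \<Rightarrow> 'a \<Rightarrow> real^'m"
  assumes N1: "N \<ge> 1" and A1: "q \<in> L2F M w N"
    and symG: "symm G0" and symQ: "\<forall>k<N. symm (Q k)" and symR: "\<forall>k<N. symm (R k)"
    and e: "\<eta> \<in> L2F M w N" and r: "\<rho> \<in> L2F M w N"
    and psdG: "psd G0"
    and pd: "\<exists>\<delta>>0. \<forall>k<N. \<forall>v. \<delta> * (norm v)\<^sup>2 \<le> v \<bullet> (R k *v v)"
    and pQ: "\<forall>k<N. psd (Q k - transpose (S k) ** matrix_inv (R k) ** S k)"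
    and xi: "\<xi> \<in> L2 M (filt M w N)" and ustar: "ustar \<in> L2F M w N"
    and H: "\<exists>x y :: nat \<Rightarrow> 'a \<Rightarrow> real^'n.
       (\<forall>k\<le>N. x k \<in> L2 M M \<and> y k \<in> L2 M M) \<and>
       (\<forall>k<N. AE s in M. x (Suc k) s =
          transpose (A k) *v x k s + Q k *v cexp M (filt M w k) (y (Suc k)) s
          + transpose (S k) *v ustar k s + \<eta> k s + w k s *\<^sub>R (transpose (C k) *v x k s)) \<and>
       (\<forall>k<N. AE s in M. y k s =
          A k *v cexp M (filt M w k) (y (Suc k)) s + B k *v ustar k s
          + C k *v cexp M (filt M w k) (\<lambda>z. w k z *\<^sub>R y (Suc k) z) s + q k s) \<and>
       (AE s in M. x 0 s = G0 *v y 0 s) \<and>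
       (AE s in M. y N s = \<xi> s) \<and>
       (\<forall>k<N. AE s in M. transpose (B k) *v x k s + S k *v cexp M (filt M w k) (y (Suc k)) s
          + R k *v ustar k s + \<rho> k s = 0)"
  shows "\<forall>u \<in> L2F M w N. J M w N A B C q G0 Q S R \<eta> \<rho> \<xi> ustar \<le> J M w N A B C q G0 Q S R \<eta> \<rho> \<xi> u"
proof
  fix u :: "nat \<Rightarrow> 'a \<Rightarrow> real^'m" assume u: "u \<in> L2F M w N"
  from H obtain x y :: "nat \<Rightarrow> 'a \<Rightarrow> real^'n" where
    H1: "\<forall>k\<le>N. x k \<in> L2 M M \<and> y k \<in> L2 M M" and
    H2: "\<forall>k<N. AE s in M. x (Suc k) s =
          transpose (A k) *v x k s + Q k *v cexp M (F k) (y (Suc k)) s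
          + transpose (S k) *v ustar k s + \<eta> k s + w k s *\<^sub>R (transpose (C k) *v x k s)" and
    H3: "\<forall>k<N. AE s in M. y k s =
          A k *v cexp M (F k) (y (Suc k)) s + B k *v ustar k s
          + C k *v cexp M (F k) (\<lambda>z. w k z *\<^sub>R y (Suc k) z) s + q k s" and
    H4: "AE s in M. x 0 s = G0 *v y 0 s" and
    H5: "AE s in M. y N s = \<xi> s" and
    H6: "\<forall>k<N. AE s in M. transpose (B k) *v x k s + S k *v cexp M (F k) (y (Suc k)) s
          + R k *v ustar k s + \<rho> k s = 0"
    by blast
  have yk: "y k \<in> L2 M (F k)" if k: "k < N" for k
  proof -
    have rr: "(\<lambda>s. A k *v cexp M (F k) (y (Suc k)) s + B k *v ustar k s + C k *v cexp M (F k) (\<lambda>z. w k z *\<^sub>R y (Suc k) z) s + q k s) \<in> L2 M (F k)"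
      by (rule rhs_L2[OF k _ L2F_L2[OF ustar k] L2F_L2[OF A1 k]]) (use H1 k in simp)
    have "y k \<in> borel_measurable (F k)" by (rule complete_F[OF L2_meas[OF rr]]) (use H3 k in blast)
    then show ?thesis using H1 k unfolding L2_def by simp
  qed
  have yF: "y k \<in> L2 M (F (min (Suc k) N))" if k: "k \<le> N" for k
  proof (cases "k < N")
    case True
    show ?thesis by (rule L2_mono[OF subalgF yk[OF True]]) (use True in simp)
  next
    case False
    then have kN: "k = N" using k by simp
    have "y N \<in> borel_measurable (F N)" by (rule complete_F[OF L2_meas[OF xi] H5])
    then have "y N \<in> L2 M (F N)" using H1 unfolding L2_def by simp
    then show ?thesis using kN by simp
  qed
  have ys: "is_state M w N A B C q \<xi> ustar y" unfolding is_state_def using yF H3 H5 by blast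
  have xL: "k \<le> N \<Longrightarrow> x k \<in> L2 M (F k)" for k
  proof (induction k)
    case 0
    have G: "subalgebra M (F 0)" using subalg by simp
    have "(\<lambda>s. G0 *v y 0 s) \<in> L2 M (F 0)" by (rule L2_mv[OF G yk]) (use N1 in simp)
    then have "x 0 \<in> borel_measurable (F 0)" by (rule complete_F[OF L2_meas H4])
    then show ?case using H1 unfolding L2_def by simp
  next
    case (Suc k)
    then have k: "k < N" by simp
    have "(\<lambda>s. transpose (A k) *v x k s + Q k *v cexp M (F k) (y (Suc k)) s + transpose (S k) *v ustar k s + \<eta> k s
        + w k s *\<^sub>R (transpose (C k) *v x k s)) \<in> L2 M (F (Suc k))"
      by (rule fwd_step[OF k Suc.IH _ L2F_L2[OF ustar k] L2F_L2[OF e k]]) (use H1 k in simp_all)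
    then have "x (Suc k) \<in> borel_measurable (F (Suc k))"
      by (rule complete_F[OF L2_meas]) (use H2 k in blast)
    then show ?case using H1 Suc.prems unfolding L2_def by blast
  qed
  define v where "v = (\<lambda>k s. u k s - ustar k s)"
  have v: "v \<in> L2F M w N" unfolding v_def by (rule L2F_diff[OF u ustar])
  define d where "d = (\<lambda>k. Yr M w N A B C (\<lambda>k x. 0) (\<lambda>x. 0) v (N - k))"
  have ds: "is_state M w N A B C (\<lambda>k x. 0) (\<lambda>x. 0) v d"
    unfolding d_def by (rule state_exists[OF L2F_zero L2_zero v])
  have uv: "(\<lambda>k s. ustar k s + v k s) = u" unfolding v_def by simp
  have st: "is_state M w N A B C q \<xi> u (\<lambda>k s. y k s + d k s)"
    using state_add[OF ys ds] unfolding uv .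
  have PhiM: "(\<lambda>s. transpose (B k) *v x k s + S k *v cexp M (F k) (y (Suc k)) s + R k *v ustar k s + \<rho> k s) \<in> L2 M M"
    if k: "k < N" for k
    by (intro L2_add[OF subalg_refl] L2_mv[OF subalg_refl] L2_FM[OF _ cexp_L2[OF prob_space_axioms sfs state_L2[OF ys]]]
        L2_FM[OF _ xL] L2_FM[OF _ L2F_L2[OF ustar k]] L2_FM[OF _ L2F_L2[OF r k]]) (use k in simp_all)
  have z: "(\<Sum>k<N. \<integral>s. (transpose (B k) *v x k s + S k *v cexp M (F k) (y (Suc k)) s + R k *v ustar k s + \<rho> k s) \<bullet> v k s \<partial>M) = 0"
  proof (rule sum.neutral, rule ballI)
    fix k assume "k \<in> {..<N}"
    then have k: "k < N" by simp
    have "(\<integral>s. (transpose (B k) *v x k s + S k *v cexp M (F k) (y (Suc k)) s + R k *v ustar k s + \<rho> k s) \<bullet> v k s \<partial>M)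
        = (\<integral>s. 0 \<bullet> v k s \<partial>M)"
      by (rule int_inner_cong_left[OF L2F_measM[OF v k] L2_meas[OF PhiM[OF k]]]) (use H6 k in simp_all)
    then show "(\<integral>s. (transpose (B k) *v x k s + S k *v cexp M (F k) (y (Suc k)) s + R k *v ustar k s + \<rho> k s) \<bullet> v k s \<partial>M) = 0"
      by simp
  qed
  have "J M w N A B C q G0 Q S R \<eta> \<rho> \<xi> u = cost M w N G0 Q S R \<eta> \<rho> (\<lambda>k s. y k s + d k s) u"
    by (rule J_eq[OF st u e r])
  also have "\<dots> = cost M w N G0 Q S R \<eta> \<rho> (\<lambda>k s. y k s + d k s) (\<lambda>k s. ustar k s + v k s)"
    unfolding uv ..
  also have "\<dots> = cost M w N G0 Q S R \<eta> \<rho> y ustar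
      + (\<Sum>k<N. \<integral>s. (transpose (B k) *v x k s + S k *v cexp M (F k) (y (Suc k)) s + R k *v ustar k s + \<rho> k s) \<bullet> v k s \<partial>M)
      + cost M w N G0 Q S R (\<lambda>k s. 0) (\<lambda>k s. 0) d v"
    by (rule expansion[OF symG symQ symR e r ustar v ys ds]) (use xL H4 H2 in auto)
  also have "\<dots> \<ge> cost M w N G0 Q S R \<eta> \<rho> y ustar"
    unfolding z using cost0_nonneg[OF psdG symR pd pQ, of M w d v] by simp
  finally show "J M w N A B C q G0 Q S R \<eta> \<rho> \<xi> ustar \<le> J M w N A B C q G0 Q S R \<eta> \<rho> \<xi> u"
    unfolding J_eq[OF ys ustar e r] .
qed

end

theorem theorem4p1:
  fixes M :: "'a measure" and w :: "nat \<Rightarrow> 'a \<Rightarrow> real" and N :: nat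
    and A C :: "nat \<Rightarrow> real^'n^'n" and B :: "nat \<Rightarrow> real^'m^'n"
    and q \<eta> :: "nat \<Rightarrow> 'a \<Rightarrow> real^'n" and \<rho> :: "nat \<Rightarrow> 'a \<Rightarrow> real^'m"
    and G0 :: "real^'n^'n" and Q :: "nat \<Rightarrow> real^'n^'n"
    and S :: "nat \<Rightarrow> real^'n^'m" and R :: "nat \<Rightarrow> real^'m^'m"
    and \<xi> :: "'a \<Rightarrow> real^'n" and ustar :: "nat \<Rightarrow> 'a \<Rightarrow> real^'m"
  assumes prob: "prob_space M" and compl: "complete_measure M" and N: "N \<ge> 1"
    and w_meas: "\<forall>k<N. w k \<in> borel_measurable M"
    and w_sq: "\<forall>k<N. integrable M (\<lambda>x. (w k x)\<^sup>2)"
    and w_mean: "\<forall>k<N. AE x in M. real_cond_exp M (filt M w k) (w k) x = 0"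
    and w_var: "\<forall>k<N. AE x in M. real_cond_exp M (filt M w k) (\<lambda>z. (w k z)\<^sup>2) x = 1"
    and A1: "q \<in> L2F M w N"
    and A2: "symm G0" "\<forall>k<N. symm (Q k)" "\<forall>k<N. symm (R k)"
            "\<eta> \<in> L2F M w N" "\<rho> \<in> L2F M w N"
    and A3: "psd G0"
            "\<exists>\<delta>>0. \<forall>k<N. \<forall>v. \<delta> * (norm v)\<^sup>2 \<le> v \<bullet> (R k *v v)"
            "\<forall>k<N. psd (Q k - transpose (S k) ** matrix_inv (R k) ** S k)"
    and xi: "\<xi> \<in> L2 M (filt M w N)"
    and ustar: "ustar \<in> L2F M w N"
  shows "(\<forall>u \<in> L2F M w N. J M w N A B C q G0 Q S R \<eta> \<rho> \<xi> ustar
                           \<le> J M w N A B C q G0 Q S R \<eta> \<rho> \<xi> u)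
    \<longleftrightarrow>
    (\<exists>x y :: nat \<Rightarrow> 'a \<Rightarrow> real^'n.
       (\<forall>k\<le>N. x k \<in> L2 M M \<and> y k \<in> L2 M M) \<and>
       (\<forall>k<N. AE s in M. x (Suc k) s =
          transpose (A k) *v x k s + Q k *v cexp M (filt M w k) (y (Suc k)) s
          + transpose (S k) *v ustar k s + \<eta> k s + w k s *\<^sub>R (transpose (C k) *v x k s)) \<and>
       (\<forall>k<N. AE s in M. y k s =
          A k *v cexp M (filt M w k) (y (Suc k)) s + B k *v ustar k s
          + C k *v cexp M (filt M w k) (\<lambda>z. w k z *\<^sub>R y (Suc k) z) s + q k s) \<and>
       (AE s in M. x 0 s = G0 *v y 0 s) \<and>
       (AE s in M. y N s = \<xi> s) \<and>
       (\<forall>k<N. AE s in M. transpose (B k) *v x k s + S k *v cexp M (filt M w k) (y (Suc k)) s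
          + R k *v ustar k s + \<rho> k s = 0))"
  proof -
  interpret setting M w N
    using prob compl w_meas w_sq w_var by (simp add: setting_def setting_axioms_def)
  show ?thesis
  proof
    assume opt: "\<forall>u \<in> L2F M w N. J M w N A B C q G0 Q S R \<eta> \<rho> \<xi> ustar
                           \<le> J M w N A B C q G0 Q S R \<eta> \<rho> \<xi> u"
    show "\<exists>x y :: nat \<Rightarrow> 'a \<Rightarrow> real^'n.
       (\<forall>k\<le>N. x k \<in> L2 M M \<and> y k \<in> L2 M M) \<and>
       (\<forall>k<N. AE s in M. x (Suc k) s =
          transpose (A k) *v x k s + Q k *v cexp M (filt M w k) (y (Suc k)) s
          + transpose (S k) *v ustar k s + \<eta> k s + w k s *\<^sub>R (transpose (C k) *v x k s)) \<and>
       (\<forall>k<N. AE s in M. y k s =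
          A k *v cexp M (filt M w k) (y (Suc k)) s + B k *v ustar k s
          + C k *v cexp M (filt M w k) (\<lambda>z. w k z *\<^sub>R y (Suc k) z) s + q k s) \<and>
       (AE s in M. x 0 s = G0 *v y 0 s) \<and>
       (AE s in M. y N s = \<xi> s) \<and>
       (\<forall>k<N. AE s in M. transpose (B k) *v x k s + S k *v cexp M (filt M w k) (y (Suc k)) s
          + R k *v ustar k s + \<rho> k s = 0)"
      by (rule necessity[OF N A1 A2(1) A2(2) A2(3) A2(4) A2(5) xi ustar opt])
  next
    assume H: "\<exists>x y :: nat \<Rightarrow> 'a \<Rightarrow> real^'n.
       (\<forall>k\<le>N. x k \<in> L2 M M \<and> y k \<in> L2 M M) \<and>
       (\<forall>k<N. AE s in M. x (Suc k) s =
          transpose (A k) *v x k s + Q k *v cexp M (filt M w k) (y (Suc k)) s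
          + transpose (S k) *v ustar k s + \<eta> k s + w k s *\<^sub>R (transpose (C k) *v x k s)) \<and>
       (\<forall>k<N. AE s in M. y k s =
          A k *v cexp M (filt M w k) (y (Suc k)) s + B k *v ustar k s
          + C k *v cexp M (filt M w k) (\<lambda>z. w k z *\<^sub>R y (Suc k) z) s + q k s) \<and>
       (AE s in M. x 0 s = G0 *v y 0 s) \<and>
       (AE s in M. y N s = \<xi> s) \<and>
       (\<forall>k<N. AE s in M. transpose (B k) *v x k s + S k *v cexp M (filt M w k) (y (Suc k)) s
          + R k *v ustar k s + \<rho> k s = 0)"
    show "\<forall>u \<in> L2F M w N. J M w N A B C q G0 Q S R \<eta> \<rho> \<xi> ustar
                           \<le> J M w N A B C q G0 Q S R \<eta> \<rho> \<xi> u"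
      by (rule sufficiency[OF N A1 A2(1) A2(2) A2(3) A2(4) A2(5) A3(1) A3(2) A3(3) xi ustar H])
  qed
qed

end
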